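(* Let $n\ge2$, let $\frac12<a\le\frac34$ and $b=2a-1$, and let $0<c_0\le1$. If $F$ is the $(a,b)$-set of divergence (a "set of type I"), then $$\dim_H\big(F\cap[0,c_0]^n\big)\ge\alpha:=\frac12+(n-1)a+b.$$
   Context: For $k\ge k_0$ let $R_k=2^k$, $D_k=R_k^{(n-(n-1)a+nb)/(n+1)}$, $Q_k=R_k^{\frac{n-1}{n+1}(2a-b-1)}$ (here $Q_k=1$). A point $(p_1/q,\dots,p_n/q)$, $p_j,q\in\mathbb{Z}$, is an admissible fraction if $\gcd(p_1,q)=1$ and: $p_2,\dots,p_n$ arbitrary when $q$ is odd; all even when $q\equiv0\pmod4$; all odd when $q\equiv2\pmod4$. Fix $0<c\ll1$. Let $\mathcal{A}_k$ be the collection of axis-parallel boxes ("slabs") of dimensions $cR_k^{-1/2}\times cR_k^{-1}\times\cdots\times cR_k^{-1}$ (long side in the $x_1$ direction) centered at $\big(2p_1R_k/(qD_k^2),p_2/(D_kq),\dots,p_n/(D_kq)\big)$ with $(p_1/q,\dots,p_n/q)$ admissible and $1\le q\le Q_k$; $F_k=\bigcup_{s\in\mathcal{A}_k}s$, and $F=\limsup_{k\to\infty}F_k=\bigcap_N\bigcup_{k\ge N}F_k$. $\dim_H$ denotes Hausdorff dimension. *)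

theory Defs
  imports "HOL-Analysis.Analysis"
begin

definition hausdorff_pre :: "real \<Rightarrow> real \<Rightarrow> ('a::metric_space) set \<Rightarrow> ennreal" where
  "hausdorff_pre s \<delta> E =
     (INF U \<in> {U :: nat \<Rightarrow> 'a set. E \<subseteq> (\<Union>i. U i) \<and>
                  (\<forall>i. bounded (U i) \<and> diameter (U i) \<le> \<delta>)}.
        (\<Sum>i. ennreal (diameter (U i) powr s)))"

definition hausdorff_measure :: "real \<Rightarrow> ('a::metric_space) set \<Rightarrow> ennreal" where
  "hausdorff_measure s E = (SUP \<delta> \<in> {0<..}. hausdorff_pre s \<delta> E)"

definition hausdorff_dim :: "('a::metric_space) set \<Rightarrow> real" where
  "hausdorff_dim E = Inf {s. 0 \<le> s \<and> hausdorff_measure s E = 0}"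

text \<open>The coordinate index i1 plays the role of the first coordinate x_1.\<close>

definition R_k :: "nat \<Rightarrow> real" where
  "R_k k = 2 ^ k"

definition D_k :: "nat \<Rightarrow> real \<Rightarrow> real \<Rightarrow> nat \<Rightarrow> real" where
  "D_k n a b k = R_k k powr ((real n - (real n - 1) * a + real n * b) / (real n + 1))"

definition Q_k :: "nat \<Rightarrow> real \<Rightarrow> real \<Rightarrow> nat \<Rightarrow> real" where
  "Q_k n a b k = R_k k powr ((real n - 1) / (real n + 1) * (2 * a - b - 1))"

definition admissible :: "'n \<Rightarrow> ('n \<Rightarrow> int) \<Rightarrow> int \<Rightarrow> bool" where
  "admissible i1 p q \<longleftrightarrow>
     gcd (p i1) q = 1 \<and>
     (q mod 4 = 0 \<longrightarrow> (\<forall>j. j \<noteq> i1 \<longrightarrow> even (p j))) \<and>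
     (q mod 4 = 2 \<longrightarrow> (\<forall>j. j \<noteq> i1 \<longrightarrow> odd (p j)))"

definition slab_center :: "'n \<Rightarrow> real \<Rightarrow> real \<Rightarrow> nat \<Rightarrow> ('n \<Rightarrow> int) \<Rightarrow> int \<Rightarrow> real ^ 'n" where
  "slab_center i1 a b k p q =
     (\<chi> i. if i = i1
           then 2 * real_of_int (p i1) * R_k k / (real_of_int q * (D_k CARD('n) a b k)\<^sup>2)
           else real_of_int (p i) / (D_k CARD('n) a b k * real_of_int q))"

definition slab :: "'n \<Rightarrow> real \<Rightarrow> real \<Rightarrow> real \<Rightarrow> nat \<Rightarrow> ('n \<Rightarrow> int) \<Rightarrow> int \<Rightarrow> (real ^ 'n) set" where
  "slab i1 a b c k p q =
     {x. \<forall>i. \<bar>x $ i - slab_center i1 a b k p q $ i\<bar>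
              \<le> (if i = i1 then c * R_k k powr (-1/2) else c * R_k k powr (-1)) / 2}"

definition F_k :: "'n \<Rightarrow> real \<Rightarrow> real \<Rightarrow> real \<Rightarrow> nat \<Rightarrow> (real ^ 'n) set" where
  "F_k i1 a b c k =
     (\<Union>{slab i1 a b c k p q | p q. admissible i1 p q \<and> 1 \<le> q \<and>
                                     real_of_int q \<le> Q_k CARD('n) a b k})"

definition divergence_set :: "'n \<Rightarrow> real \<Rightarrow> real \<Rightarrow> real \<Rightarrow> (real ^ 'n) set" where
  "divergence_set i1 a b c = (\<Inter>N. \<Union>k\<in>{N..}. F_k i1 a b c k)"

end

theory Submission
  imports Defs
begin

lemma card_int_window:
  fixes s y r :: real
  assumes "0 < s" "0 \<le> r"
  shows "real (card {t::int. \<bar>of_int t * s - y\<bar> \<le> r}) \<le> 2 * r / s + 1"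
proof -
  have eq: "{t::int. \<bar>of_int t * s - y\<bar> \<le> r} = {\<lceil>(y - r) / s\<rceil>..\<lfloor>(y + r) / s\<rfloor>}"
  proof (intro set_eqI iffI)
    fix t :: int assume "t \<in> {t::int. \<bar>of_int t * s - y\<bar> \<le> r}"
    then have a: "(y - r) / s \<le> of_int t" and b: "of_int t \<le> (y + r)/s" using assms
      by (auto simp: field_simps abs_le_iff)
    from a have "\<lceil>(y - r) / s\<rceil> \<le> t" by (simp add: ceiling_le_iff)
    moreover from b have "t \<le> \<lfloor>(y + r) / s\<rfloor>" by (simp add: le_floor_iff)
    ultimately show "t \<in> {\<lceil>(y - r) / s\<rceil>..\<lfloor>(y + r) / s\<rfloor>}" by simp
  next
    fix t :: int assume "t \<in> {\<lceil>(y - r) / s\<rceil>..\<lfloor>(y + r) / s\<rfloor>}"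
    then have "(y - r) / s \<le> of_int t" "of_int t \<le> (y + r)/s"
      by (auto simp: ceiling_le_iff le_floor_iff)
    then show "t \<in> {t::int. \<bar>of_int t * s - y\<bar> \<le> r}" using assms
      by (auto simp: field_simps abs_le_iff)
  qed
  have "real (card {\<lceil>(y - r) / s\<rceil>..\<lfloor>(y + r) / s\<rfloor>}) = real (nat (\<lfloor>(y + r) / s\<rfloor> + 1 - \<lceil>(y - r) / s\<rceil>))"
    by simp
  also have "\<dots> \<le> 2 * r / s + 1"
  proof (cases "\<lfloor>(y + r) / s\<rfloor> + 1 - \<lceil>(y - r) / s\<rceil> \<ge> 0")
    case True
    have "real_of_int \<lfloor>(y + r) / s\<rfloor> \<le> (y+r)/s" by simp
    moreover have "(y-r)/s \<le> real_of_int \<lceil>(y - r) / s\<rceil>" by simp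
    moreover have "(y+r)/s - (y-r)/s = 2*r/s" by (simp add: diff_divide_distrib[symmetric])
    ultimately show ?thesis using True by linarith
  next
    case False
    then show ?thesis using assms by simp
  qed
  finally show ?thesis using eq by simp
qed

lemma finite_int_window:
  fixes s y r :: real
  assumes "0 < s"
  shows "finite {t::int. \<bar>of_int t * s - y\<bar> \<le> r}"
proof -
  have "{t::int. \<bar>of_int t * s - y\<bar> \<le> r} \<subseteq> {\<lceil>(y - r) / s\<rceil>..\<lfloor>(y + r) / s\<rfloor>}"
  proof
    fix t :: int assume "t \<in> {t::int. \<bar>of_int t * s - y\<bar> \<le> r}"
    then have a: "(y - r) / s \<le> of_int t" and b: "of_int t \<le> (y + r)/s" using assms
      by (auto simp: field_simps abs_le_iff)
    from a have "\<lceil>(y - r) / s\<rceil> \<le> t" by (simp add: ceiling_le_iff)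
    moreover from b have "t \<le> \<lfloor>(y + r) / s\<rfloor>" by (simp add: le_floor_iff)
    ultimately show "t \<in> {\<lceil>(y - r) / s\<rceil>..\<lfloor>(y + r) / s\<rfloor>}" by simp
  qed
  then show ?thesis by (rule finite_subset) simp
qed

locale tree1 =
  fixes s h :: "nat \<Rightarrow> real"
  assumes s_pos: "\<And>j. 0 < s j" and h_pos: "\<And>j. 0 < h j"
    and h_half: "\<And>j. h (Suc j) \<le> h j / 2"
    and h_big: "\<And>j. 2 * s (Suc j) \<le> h j"
    and sep: "\<And>j. 1 \<le> j \<Longrightarrow> 2 * h j < s j"
begin

definition Mc :: "nat \<Rightarrow> nat" where "Mc j = nat \<lfloor>h j / (2 * s (Suc j))\<rfloor>"
definition lo :: "nat \<Rightarrow> int \<Rightarrow> int" where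
  "lo j t = \<lceil>(of_int t * s j - h j / 2) / s (Suc j)\<rceil>"

fun pos :: "nat list \<Rightarrow> int" where
  "pos [] = 1"
| "pos (u # xs) = lo (length xs) (pos xs) + int u"

fun Dig :: "nat \<Rightarrow> nat list set" where
  "Dig 0 = {[]}"
| "Dig (Suc j) = (\<lambda>(u, xs). u # xs) ` ({..<Mc j} \<times> Dig j)"

definition ctr :: "nat list \<Rightarrow> real" where "ctr xs = of_int (pos xs) * s (length xs)"
definition Iv :: "nat list \<Rightarrow> real set" where
  "Iv xs = {ctr xs - h (length xs) .. ctr xs + h (length xs)}"
definition P :: "nat \<Rightarrow> nat" where "P j = (\<Prod>i<j. Mc i)"

lemma Dig_len: "xs \<in> Dig j \<Longrightarrow> length xs = j"
  by (induction j arbitrary: xs) auto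

lemma Cons_Suc_iff: "u # xs \<in> Dig (Suc j) \<longleftrightarrow> u < Mc j \<and> xs \<in> Dig j"
  by auto

lemma finite_Dig: "finite (Dig j)"
  by (induction j) auto

lemma inj_cons: "inj_on (\<lambda>(u::nat, xs). u # xs) A"
  by (auto simp: inj_on_def)

lemma card_Dig: "card (Dig j) = P j"
proof (induction j)
  case 0 then show ?case by (simp add: P_def)
next
  case (Suc j)
  have "card (Dig (Suc j)) = card ({..<Mc j} \<times> Dig j)"
    by (simp add: card_image[OF inj_cons])
  also have "\<dots> = Mc j * P j" using Suc by (simp add: card_cartesian_product)
  finally show ?case by (simp add: P_def)
qed

lemma P_Suc: "P (Suc j) = P j * Mc j" by (simp add: P_def)

lemma Mc_ge1: "1 \<le> Mc j"
proof -
  have "1 \<le> h j / (2 * s (Suc j))" using h_big[of j] s_pos[of "Suc j"] by simp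
  then show ?thesis unfolding Mc_def by linarith
qed

lemma P_pos: "0 < P j"
proof -
  have "\<And>a. 0 < Mc a" using Mc_ge1 by (simp add: Suc_le_eq)
  then show ?thesis by (simp add: P_def prod_pos)
qed

lemma Mc_lower: "h j / (4 * s (Suc j)) \<le> real (Mc j)"
proof -
  define x where "x = h j / (2 * s (Suc j))"
  have x1: "1 \<le> x" using h_big[of j] s_pos[of "Suc j"] by (simp add: x_def)
  have "x / 2 \<le> of_int \<lfloor>x\<rfloor>"
  proof (cases "x < 2")
    case True
    have "1 \<le> \<lfloor>x\<rfloor>" using x1 by (simp add: le_floor_iff)
    then show ?thesis using True by linarith
  next
    case False then show ?thesis using floor_correct[of x] by linarith
  qed
  moreover have "h j / (4 * s (Suc j)) = x / 2" by (simp add: x_def)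
  moreover have "real (Mc j) = of_int \<lfloor>x\<rfloor>" using x1 by (simp add: Mc_def x_def)
  ultimately show ?thesis by simp
qed

lemma Mc_upper: "real (Mc j) * s (Suc j) \<le> h j / 2"
proof -
  define x where "x = h j / (2 * s (Suc j))"
  have x1: "1 \<le> x" using h_big[of j] s_pos[of "Suc j"] by (simp add: x_def)
  have "real (Mc j) = of_int \<lfloor>x\<rfloor>" using x1 by (simp add: Mc_def x_def)
  also have "\<dots> \<le> x" by simp
  finally have "real (Mc j) * s (Suc j) \<le> x * s (Suc j)" using s_pos[of "Suc j"]
    by (simp add: mult_right_mono)
  also have "\<dots> = h j / 2" using s_pos[of "Suc j"] by (simp add: x_def field_simps)
  finally show ?thesis .
qed

lemma child_ctr:
  assumes "u < Mc (length xs)"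
  shows "ctr xs - h (length xs) / 2 \<le> ctr (u # xs)" "ctr (u # xs) \<le> ctr xs"
proof -
  let ?j = "length xs"
  let ?s = "s (Suc ?j)"
  have sp: "0 < ?s" by (rule s_pos)
  define z where "z = (of_int (pos xs) * s ?j - h ?j / 2) / ?s"
  have ctr_eq: "ctr (u # xs) = (of_int \<lceil>z\<rceil> + real u) * ?s"
    by (simp add: ctr_def lo_def z_def)
  have "z \<le> of_int \<lceil>z\<rceil>" by simp
  then have "z \<le> of_int \<lceil>z\<rceil> + real u" by linarith
  then have "z * ?s \<le> (of_int \<lceil>z\<rceil> + real u) * ?s" using sp
    by (intro mult_right_mono) auto
  moreover have "z * ?s = ctr xs - h ?j / 2" using sp by (simp add: z_def ctr_def)
  ultimately show "ctr xs - h ?j / 2 \<le> ctr (u # xs)" using ctr_eq by simp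
  have "of_int \<lceil>z\<rceil> < z + 1" by linarith
  have "real u + 1 \<le> real (Mc ?j)" using assms by simp
  then have "(of_int \<lceil>z\<rceil> + real u) * ?s \<le> (z + real (Mc ?j)) * ?s"
    using \<open>of_int \<lceil>z\<rceil> < z + 1\<close> sp by (intro mult_right_mono) auto
  also have "\<dots> = ctr xs - h ?j / 2 + real (Mc ?j) * ?s" using sp
    by (simp add: z_def ctr_def field_simps)
  also have "\<dots> \<le> ctr xs" using Mc_upper[of ?j] by simp
  finally show "ctr (u # xs) \<le> ctr xs" using ctr_eq by simp
qed

lemma child_sub:
  assumes "u < Mc (length xs)"
  shows "Iv (u # xs) \<subseteq> Iv xs"
  using child_ctr[OF assms] h_half[of "length xs"]
  by (auto simp: Iv_def)

lemma child_ctr_in: "u < Mc (length xs) \<Longrightarrow> ctr (u # xs) \<in> Iv xs"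
  using child_ctr[of u xs] h_pos[of "length xs"] by (auto simp: Iv_def)

lemma pos_inj: "inj_on pos (Dig j)"
proof (induction j)
  case 0 then show ?case by simp
next
  case (Suc j)
  show ?case
  proof (rule inj_onI)
    fix ys zs assume ys: "ys \<in> Dig (Suc j)" and zs: "zs \<in> Dig (Suc j)" and eq: "pos ys = pos zs"
    obtain u xs where ys_eq: "ys = u # xs" and u: "u < Mc j" and xs: "xs \<in> Dig j" using ys by auto
    obtain v ws where zs_eq: "zs = v # ws" and v: "v < Mc j" and ws: "ws \<in> Dig j" using zs by auto
    have lx: "length xs = j" "length ws = j" using xs ws Dig_len by auto
    show "ys = zs"
    proof (cases "xs = ws")
      case True
      then show ?thesis using eq ys_eq zs_eq by simp
    next
      case False
      then have pne: "pos xs \<noteq> pos ws" using Suc.IH xs ws by (auto dest: inj_onD)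
      have j1: "1 \<le> j"
      proof (rule ccontr)
        assume "\<not> 1 \<le> j" then have "j = 0" by simp
        then show False using xs ws False by simp
      qed
      have "ctr ys = ctr zs" using eq ys_eq zs_eq lx by (simp add: ctr_def)
      moreover have "ctr ys \<in> Iv xs" using child_ctr_in[of u xs] u lx ys_eq by simp
      moreover have "ctr zs \<in> Iv ws" using child_ctr_in[of v ws] v lx zs_eq by simp
      moreover have "\<bar>ctr xs - ctr ws\<bar> \<ge> s j"
      proof -
        have "\<bar>pos xs - pos ws\<bar> \<ge> 1" using pne by linarith
        then have "real_of_int \<bar>pos xs - pos ws\<bar> \<ge> 1" by linarith
        then have "\<bar>real_of_int (pos xs) - real_of_int (pos ws)\<bar> * s j \<ge> 1 * s j"
          using s_pos[of j] by (intro mult_right_mono) auto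
        then show ?thesis using lx s_pos[of j]
          by (simp add: ctr_def abs_mult left_diff_distrib[symmetric])
      qed
      ultimately show ?thesis using sep[OF j1] lx by (auto simp: Iv_def abs_le_iff)
    qed
  qed
qed


definition Aset :: "nat \<Rightarrow> real \<Rightarrow> real \<Rightarrow> nat list set" where
  "Aset J y d = {xs \<in> Dig J. Iv xs \<subseteq> {y - d .. y + d}}"
definition Gset :: "nat \<Rightarrow> real \<Rightarrow> real \<Rightarrow> nat list set" where
  "Gset J y d = {xs \<in> Dig J. Iv xs \<inter> {y - d .. y + d} \<noteq> {}}"

lemma finite_Aset: "finite (Aset J y d)" unfolding Aset_def using finite_Dig by simp
lemma finite_Gset: "finite (Gset J y d)" unfolding Gset_def using finite_Dig by simp

lemma Iv_ne: "Iv xs \<noteq> {}" using h_pos[of "length xs"] by (simp add: Iv_def)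

lemma A_le_G: "card (Aset J y d) \<le> card (Gset J y d)"
proof (rule card_mono[OF finite_Gset])
  show "Aset J y d \<subseteq> Gset J y d" unfolding Aset_def Gset_def using Iv_ne by blast
qed

lemma A_mono: "Mc J * card (Aset J y d) \<le> card (Aset (Suc J) y d)"
proof -
  have sub: "(\<lambda>(u, xs). u # xs) ` ({..<Mc J} \<times> Aset J y d) \<subseteq> Aset (Suc J) y d"
  proof
    fix z assume "z \<in> (\<lambda>(u, xs). u # xs) ` ({..<Mc J} \<times> Aset J y d)"
    then obtain u xs where z: "z = u # xs" "u < Mc J" "xs \<in> Aset J y d" by auto
    then have "length xs = J" using Dig_len by (auto simp: Aset_def)
    then have "Iv (u # xs) \<subseteq> Iv xs" using child_sub z by simp
    then show "z \<in> Aset (Suc J) y d" using z by (auto simp: Aset_def)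
  qed
  have "Mc J * card (Aset J y d) = card ((\<lambda>(u, xs). u # xs) ` ({..<Mc J} \<times> Aset J y d))"
    by (simp add: card_image[OF inj_cons] card_cartesian_product)
  also have "\<dots> \<le> card (Aset (Suc J) y d)" by (rule card_mono[OF finite_Aset sub])
  finally show ?thesis .
qed

lemma G_step: "card (Gset (Suc J) y d) \<le> Mc J * card (Gset J y d)"
proof -
  have sub: "Gset (Suc J) y d \<subseteq> (\<lambda>(u, xs). u # xs) ` ({..<Mc J} \<times> Gset J y d)"
  proof
    fix z assume "z \<in> Gset (Suc J) y d"
    then obtain u xs where z: "z = u # xs" "u < Mc J" "xs \<in> Dig J"
      and m: "Iv (u # xs) \<inter> {y - d .. y + d} \<noteq> {}" by (auto simp: Gset_def)
    then have "length xs = J" using Dig_len by auto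
    then have "Iv (u # xs) \<subseteq> Iv xs" using child_sub z by simp
    then have "xs \<in> Gset J y d" using m z by (auto simp: Gset_def)
    then show "z \<in> (\<lambda>(u, xs). u # xs) ` ({..<Mc J} \<times> Gset J y d)" using z by auto
  qed
  have "card (Gset (Suc J) y d) \<le> card ((\<lambda>(u, xs). u # xs) ` ({..<Mc J} \<times> Gset J y d))"
    by (rule card_mono[OF _ sub]) (simp add: finite_Gset)
  also have "\<dots> = Mc J * card (Gset J y d)"
    by (simp add: card_image[OF inj_cons] card_cartesian_product)
  finally show ?thesis .
qed

lemma meet_ctr:
  assumes "Iv xs \<inter> {y - d .. y + d} \<noteq> {}"
  shows "\<bar>ctr xs - y\<bar> \<le> d + h (length xs)"
  using assms by (auto simp: Iv_def abs_le_iff)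

lemma G_bound:
  assumes "1 \<le> J" "0 \<le> d"
  shows "real (card (Gset J y d)) \<le> (2 * d + 2 * h J) / s J + 1"
proof -
  let ?T = "{t::int. \<bar>of_int t * s J - y\<bar> \<le> d + h J}"
  have "pos ` Gset J y d \<subseteq> ?T"
  proof
    fix t assume "t \<in> pos ` Gset J y d"
    then obtain xs where xs: "xs \<in> Gset J y d" "t = pos xs" by auto
    then have "length xs = J" using Dig_len by (auto simp: Gset_def)
    then show "t \<in> ?T" using meet_ctr[of xs y d] xs by (auto simp: Gset_def ctr_def)
  qed
  moreover have "inj_on pos (Gset J y d)"
    by (rule inj_on_subset[OF pos_inj]) (auto simp: Gset_def)
  ultimately have "card (Gset J y d) \<le> card ?T"
    by (intro card_inj_on_le finite_int_window s_pos)
  then have "real (card (Gset J y d)) \<le> real (card ?T)" by simp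
  also have "\<dots> \<le> 2 * (d + h J) / s J + 1"
    using card_int_window[of "s J" "d + h J" y] s_pos h_pos assms by (simp add: add_nonneg_nonneg less_imp_le)
  finally show ?thesis by (simp add: distrib_left)
qed

lemma G_step2:
  assumes "0 \<le> d"
  shows "real (card (Gset (Suc J) y d)) \<le> real (card (Gset J y d)) * ((2 * d + 2 * h (Suc J)) / s (Suc J) + 1)"
proof -
  define B where "B = (2 * d + 2 * h (Suc J)) / s (Suc J) + 1"
  define C where "C xs = {u. u < Mc J \<and> Iv (u # xs) \<inter> {y - d .. y + d} \<noteq> {}}" for xs
  have sub: "Gset (Suc J) y d \<subseteq> (\<lambda>(u, xs). u # xs) ` (\<Union>xs\<in>Gset J y d. C xs \<times> {xs})"
  proof
    fix z assume "z \<in> Gset (Suc J) y d"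
    then obtain u xs where z: "z = u # xs" "u < Mc J" "xs \<in> Dig J"
      and m: "Iv (u # xs) \<inter> {y - d .. y + d} \<noteq> {}" by (auto simp: Gset_def)
    then have "length xs = J" using Dig_len by auto
    then have "Iv (u # xs) \<subseteq> Iv xs" using child_sub z by simp
    then have "xs \<in> Gset J y d" using m z by (auto simp: Gset_def)
    then show "z \<in> (\<lambda>(u, xs). u # xs) ` (\<Union>xs\<in>Gset J y d. C xs \<times> {xs})"
      using z m by (auto simp: C_def)
  qed
  have Cb: "real (card (C xs)) \<le> B" if "xs \<in> Gset J y d" for xs
  proof -
    have lx: "length xs = J" using that Dig_len by (auto simp: Gset_def)
    let ?T = "{t::int. \<bar>of_int t * s (Suc J) - y\<bar> \<le> d + h (Suc J)}"
    have "(\<lambda>u. lo J (pos xs) + int u) ` C xs \<subseteq> ?T"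
    proof
      fix t assume "t \<in> (\<lambda>u. lo J (pos xs) + int u) ` C xs"
      then obtain u where u: "u \<in> C xs" "t = lo J (pos xs) + int u" by auto
      then show "t \<in> ?T" using meet_ctr[of "u # xs" y d] lx by (auto simp: C_def ctr_def)
    qed
    moreover have "inj_on (\<lambda>u. lo J (pos xs) + int u) (C xs)" by (auto simp: inj_on_def)
    ultimately have "card (C xs) \<le> card ?T"
      by (intro card_inj_on_le finite_int_window s_pos)
    then have "real (card (C xs)) \<le> real (card ?T)" by simp
    also have "\<dots> \<le> 2 * (d + h (Suc J)) / s (Suc J) + 1"
      using card_int_window[of "s (Suc J)" "d + h (Suc J)" y] s_pos h_pos assms
      by (simp add: add_nonneg_nonneg less_imp_le)
    finally show ?thesis by (simp add: B_def distrib_left)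
  qed
  have fC: "finite (C xs)" for xs by (simp add: C_def)
  have "card (Gset (Suc J) y d) \<le> card ((\<lambda>(u, xs). u # xs) ` (\<Union>xs\<in>Gset J y d. C xs \<times> {xs}))"
    by (rule card_mono[OF _ sub]) (simp add: finite_Gset fC)
  also have "\<dots> \<le> card (\<Union>xs\<in>Gset J y d. C xs \<times> {xs})" by (rule card_image_le) (simp add: finite_Gset fC)
  also have "\<dots> \<le> (\<Sum>xs\<in>Gset J y d. card (C xs \<times> {xs}))" by (rule card_UN_le[OF finite_Gset])
  also have "\<dots> = (\<Sum>xs\<in>Gset J y d. card (C xs))"
    by (rule sum.cong) (simp_all add: card_cartesian_product)
  finally have "real (card (Gset (Suc J) y d)) \<le> real (\<Sum>xs\<in>Gset J y d. card (C xs))"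
    by (simp only: of_nat_le_iff)
  also have "\<dots> = (\<Sum>xs\<in>Gset J y d. real (card (C xs)))" by (rule of_nat_sum)
  also have "\<dots> \<le> (\<Sum>xs\<in>Gset J y d. B)" by (rule sum_mono) (rule Cb)
  also have "\<dots> = real (card (Gset J y d)) * B" by simp
  finally show ?thesis by (simp add: B_def)
qed

lemma G_chain: "j \<le> J \<Longrightarrow> card (Gset J y d) * P j \<le> card (Gset j y d) * P J"
proof (induction J)
  case 0 then show ?case by simp
next
  case (Suc J)
  show ?case
  proof (cases "j = Suc J")
    case True then show ?thesis by simp
  next
    case False
    then have "j \<le> J" using Suc.prems by simp
    have "card (Gset (Suc J) y d) * P j \<le> Mc J * card (Gset J y d) * P j"
      using G_step by (simp add: mult_right_mono)
    also have "\<dots> = Mc J * (card (Gset J y d) * P j)" by simp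
    also have "\<dots> \<le> Mc J * (card (Gset j y d) * P J)" using Suc.IH[OF \<open>j \<le> J\<close>] by simp
    also have "\<dots> = card (Gset j y d) * P (Suc J)" by (simp add: P_Suc)
    finally show ?thesis .
  qed
qed

lemma A_chain: "J \<le> j \<Longrightarrow> card (Aset J y d) * P j \<le> card (Aset j y d) * P J"
proof (induction j)
  case 0 then show ?case by simp
next
  case (Suc j)
  show ?case
  proof (cases "J = Suc j")
    case True then show ?thesis by simp
  next
    case False
    then have "J \<le> j" using Suc.prems by simp
    have "card (Aset J y d) * P (Suc j) = Mc j * (card (Aset J y d) * P j)" by (simp add: P_Suc)
    also have "\<dots> \<le> Mc j * (card (Aset j y d) * P J)" using Suc.IH[OF \<open>J \<le> j\<close>] by simp
    also have "\<dots> = (Mc j * card (Aset j y d)) * P J" by simp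
    also have "\<dots> \<le> card (Aset (Suc j) y d) * P J" using A_mono by (simp add: mult_right_mono)
    finally show ?thesis .
  qed
qed

lemma nu_le_G: "real (card (Aset J y d)) / real (P J) \<le> real (card (Gset j y d)) / real (P j)"
proof -
  have PJ: "0 < real (P J)" and Pj: "0 < real (P j)" using P_pos by auto
  have "card (Aset J y d) * P j \<le> card (Gset j y d) * P J"
  proof (cases "j \<le> J")
    case True
    have "card (Aset J y d) * P j \<le> card (Gset J y d) * P j" using A_le_G by simp
    also have "\<dots> \<le> card (Gset j y d) * P J" by (rule G_chain[OF True])
    finally show ?thesis .
  next
    case False
    then have "J \<le> j" by simp
    have "card (Aset J y d) * P j \<le> card (Aset j y d) * P J" by (rule A_chain[OF \<open>J \<le> j\<close>])
    also have "\<dots> \<le> card (Gset j y d) * P J" using A_le_G by simp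
    finally show ?thesis .
  qed
  then have "real (card (Aset J y d)) * real (P j) \<le> real (card (Gset j y d)) * real (P J)"
    by (metis of_nat_le_iff of_nat_mult)
  then show ?thesis using PJ Pj by (simp add: divide_simps)
qed

lemma nu1:
  assumes "1 \<le> j" "0 \<le> d"
  shows "real (card (Aset J y d)) / real (P J) \<le> ((2 * d + 2 * h j) / s j + 1) / real (P j)"
  using nu_le_G[of J y d j] G_bound[OF assms, of y] P_pos[of j]
  by (smt (verit) divide_right_mono of_nat_0_le_iff)

lemma nu2:
  assumes "1 \<le> j" "0 \<le> d"
  shows "real (card (Aset J y d)) / real (P J) \<le>
     ((2 * d + 2 * h j) / s j + 1) * ((2 * d + 2 * h (Suc j)) / s (Suc j) + 1) / real (P (Suc j))"
proof -
  have "real (card (Gset (Suc j) y d)) \<le> real (card (Gset j y d)) * ((2 * d + 2 * h (Suc j)) / s (Suc j) + 1)"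
    by (rule G_step2[OF assms(2)])
  also have "\<dots> \<le> ((2 * d + 2 * h j) / s j + 1) * ((2 * d + 2 * h (Suc j)) / s (Suc j) + 1)"
  proof (rule mult_right_mono)
    show "real (card (Gset j y d)) \<le> (2 * d + 2 * h j) / s j + 1" using G_bound[OF assms, of y] .
    have "0 \<le> (2 * d + 2 * h (Suc j)) / s (Suc j)"
      using s_pos[of "Suc j"] h_pos[of "Suc j"] assms(2) by simp
    then show "0 \<le> (2 * d + 2 * h (Suc j)) / s (Suc j) + 1" by linarith
  qed
  finally have "real (card (Gset (Suc j) y d)) / real (P (Suc j)) \<le> \<dots> / real (P (Suc j))"
    using P_pos by (intro divide_right_mono) auto
  then show ?thesis using nu_le_G[of J y d "Suc j"] by linarith
qed

definition nu :: "nat \<Rightarrow> real \<Rightarrow> real \<Rightarrow> real" where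
  "nu J y d = real (card (Aset J y d)) / real (P J)"

lemma nu_nonneg: "0 \<le> nu J y d" by (simp add: nu_def)

lemma P_lower: "h j / (4 * s (Suc j)) \<le> real (P (Suc j))"
proof -
  have "h j / (4 * s (Suc j)) \<le> real (Mc j)" by (rule Mc_lower)
  also have "\<dots> \<le> real (P j) * real (Mc j)"
  proof -
    have "1 \<le> real (P j)" using P_pos[of j] by simp
    from mult_right_mono[OF this, of "real (Mc j)"] show ?thesis by simp
  qed
  finally show ?thesis by (simp add: P_Suc)
qed

lemma g_small:
  assumes "1 \<le> j" "0 \<le> d" "d \<le> s j"
  shows "(2 * d + 2 * h j) / s j + 1 \<le> 4"
proof -
  have "2 * d + 2 * h j \<le> 3 * s j" using sep[OF assms(1)] assms by linarith
  then have "(2 * d + 2 * h j) / s j \<le> 3" using s_pos[of j] by (simp add: divide_le_eq)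
  then show ?thesis by linarith
qed

lemma g_big:
  assumes "1 \<le> j" "s j \<le> d"
  shows "(2 * d + 2 * h j) / s j + 1 \<le> 4 * d / s j"
proof -
  have sp: "0 < s j" by (rule s_pos)
  have "2 * d + 2 * h j + s j \<le> 4 * d" using sep[OF assms(1)] assms by linarith
  then have "(2 * d + 2 * h j + s j) / s j \<le> 4 * d / s j" using sp by (intro divide_right_mono) auto
  then show ?thesis using sp by (simp add: add_divide_distrib)
qed

lemma nu_small:
  assumes "1 \<le> j" "0 \<le> d" "d \<le> s j"
  shows "nu J y d \<le> 4 / real (P j)"
proof -
  have "nu J y d \<le> ((2 * d + 2 * h j) / s j + 1) / real (P j)"
    unfolding nu_def by (rule nu1[OF assms(1,2)])
  also have "\<dots> \<le> 4 / real (P j)"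
    using g_small[OF assms] P_pos[of j] by (intro divide_right_mono) auto
  finally show ?thesis .
qed

lemma nu_big_here:
  assumes "1 \<le> j" "s j \<le> d"
  shows "nu J y d \<le> 4 * d / (s j * real (P j))"
proof -
  have d: "0 \<le> d" using assms s_pos[of j] by linarith
  have "nu J y d \<le> ((2 * d + 2 * h j) / s j + 1) / real (P j)"
    unfolding nu_def by (rule nu1[OF assms(1) d])
  also have "\<dots> \<le> (4 * d / s j) / real (P j)"
    using g_big[OF assms] P_pos[of j] by (intro divide_right_mono) auto
  finally show ?thesis by simp
qed

lemma nu_big:
  assumes "s (Suc j) \<le> d"
  shows "nu J y d \<le> 16 * d / (h j * real (P j))"
proof -
  have sp: "0 < s (Suc j)" by (rule s_pos)
  have d: "0 < d" using assms sp by linarith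
  have "nu J y d \<le> 4 * d / (s (Suc j) * real (P (Suc j)))"
    by (rule nu_big_here) (use assms in auto)
  also have "\<dots> \<le> 4 * d / (s (Suc j) * (h j / (4 * s (Suc j)) * real (P j)))"
  proof (rule divide_left_mono)
    have "h j / (4 * s (Suc j)) * real (P j) \<le> real (Mc j) * real (P j)"
      using Mc_lower[of j] P_pos[of j] by (intro mult_right_mono) auto
    also have "\<dots> = real (P (Suc j))" by (simp add: P_Suc)
    finally show "s (Suc j) * (h j / (4 * s (Suc j)) * real (P j)) \<le> s (Suc j) * real (P (Suc j))"
      using sp by (intro mult_left_mono) auto
    show "0 \<le> 4 * d" using d by simp
    show "0 < s (Suc j) * real (P (Suc j)) * (s (Suc j) * (h j / (4 * s (Suc j)) * real (P j)))"
      using sp P_pos h_pos[of j] by simp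
  qed
  also have "\<dots> = 16 * d / (h j * real (P j))" using sp by (simp add: field_simps)
  finally show ?thesis .
qed

lemma nu_mid:
  assumes "1 \<le> j" "d \<le> s j" "s (Suc j) \<le> d"
  shows "nu J y d \<le> 64 * d / (h j * real (P j))"
proof -
  have sp: "0 < s (Suc j)" by (rule s_pos)
  have d: "0 < d" using assms sp by linarith
  have "nu J y d \<le> ((2 * d + 2 * h j) / s j + 1) * ((2 * d + 2 * h (Suc j)) / s (Suc j) + 1) / real (P (Suc j))"
    unfolding nu_def by (rule nu2[OF assms(1)]) (use d in simp)
  also have "\<dots> \<le> 4 * (4 * d / s (Suc j)) / real (P (Suc j))"
  proof (rule divide_right_mono)
    show "((2 * d + 2 * h j) / s j + 1) * ((2 * d + 2 * h (Suc j)) / s (Suc j) + 1) \<le> 4 * (4 * d / s (Suc j))"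
    proof (rule mult_mono)
      show "(2 * d + 2 * h j) / s j + 1 \<le> 4" by (rule g_small) (use assms d in auto)
      show "(2 * d + 2 * h (Suc j)) / s (Suc j) + 1 \<le> 4 * d / s (Suc j)" by (rule g_big) (use assms in auto)
      show "0 \<le> (4::real)" by simp
      have "0 \<le> (2 * d + 2 * h (Suc j)) / s (Suc j)" using d h_pos[of "Suc j"] sp by simp
      then show "0 \<le> (2 * d + 2 * h (Suc j)) / s (Suc j) + 1" by linarith
    qed
  qed simp
  also have "\<dots> \<le> 64 * d / (h j * real (P j))"
  proof -
    have "h j / (4 * s (Suc j)) * real (P j) \<le> real (P (Suc j))"
    proof -
      have "h j / (4 * s (Suc j)) * real (P j) \<le> real (Mc j) * real (P j)"
        using Mc_lower[of j] P_pos[of j] by (intro mult_right_mono) auto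
      also have "\<dots> = real (P (Suc j))" by (simp add: P_Suc)
      finally show ?thesis .
    qed
    then have "4 * (4 * d / s (Suc j)) / real (P (Suc j)) \<le> 4 * (4 * d / s (Suc j)) / (h j / (4 * s (Suc j)) * real (P j))"
    proof (rule divide_left_mono)
      have X: "0 < h j / (4 * s (Suc j)) * real (P j)" using sp h_pos[of j] P_pos[of j] by simp
      have "0 < real (P (Suc j))" using P_pos[of "Suc j"] by simp
      from this X show "0 < real (P (Suc j)) * (h j / (4 * s (Suc j)) * real (P j))" by (rule mult_pos_pos)
    qed (use d sp in auto)
    also have "\<dots> = 64 * d / (h j * real (P j))" using sp by (simp add: field_simps)
    finally show ?thesis by simp
  qed
  finally show ?thesis by simp
qed

end

lemma diameter_thicken:
  fixes U :: "'a::real_normed_vector set"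
  assumes "bounded U" "0 \<le> r"
  shows "diameter (\<Union>u\<in>U. ball u r) \<le> diameter U + 2 * r"
proof (rule diameter_le)
  show "(\<Union>u\<in>U. ball u r) \<noteq> {} \<or> 0 \<le> diameter U + 2 * r"
    using assms diameter_ge_0[OF assms(1)] by simp
  fix x y assume "x \<in> (\<Union>u\<in>U. ball u r)" "y \<in> (\<Union>u\<in>U. ball u r)"
  then obtain u v where uv: "u \<in> U" "v \<in> U" "dist u x < r" "dist v y < r" by auto
  have "dist u v \<le> diameter U" by (rule diameter_bounded_bound[OF assms(1) uv(1,2)])
  then have "dist x y \<le> diameter U + 2 * r" using uv(3,4) dist_triangle[of x y u] dist_triangle[of u y v]
    by (simp add: dist_commute)
  then show "norm (x - y) \<le> diameter U + 2 * r" by (simp add: dist_norm)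
qed

lemma powr_sum_bound:
  fixes d t s s0 :: real
  assumes "0 \<le> d" "d \<le> 1" "0 \<le> t" "0 \<le> s" "s \<le> s0" "0 < s0" "0 \<le> q"
    and "q \<le> d + t"
  shows "q powr s0 \<le> 2 powr s0 * (d powr s + t powr s0)"
proof -
  have "q \<le> 2 * max d t" using assms by linarith
  then have "q powr s0 \<le> (2 * max d t) powr s0" using assms by (intro powr_mono2) auto
  also have "\<dots> = 2 powr s0 * max d t powr s0" using assms by (simp add: powr_mult)
  also have "max d t powr s0 \<le> d powr s0 + t powr s0" by (simp add: max_def)
  then have "2 powr s0 * max d t powr s0 \<le> 2 powr s0 * (d powr s0 + t powr s0)" by simp
  also have "d powr s0 \<le> d powr s" using assms by (intro powr_mono') auto
  then have "2 powr s0 * (d powr s0 + t powr s0) \<le> 2 powr s0 * (d powr s + t powr s0)" by simp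
  finally show ?thesis .
qed

lemma mass_principle:
  fixes K :: "nat \<Rightarrow> 'a::euclidean_space set" and D :: "nat \<Rightarrow> 'b set"
    and bx :: "nat \<Rightarrow> 'b \<Rightarrow> 'a set" and \<rho> :: "nat \<Rightarrow> real"
  assumes K0: "compact (K 0)" and Kcl: "\<And>J. closed (K J)" and Kdec: "\<And>J. K (Suc J) \<subseteq> K J"
    and KD: "\<And>J. K J = (\<Union>e\<in>D J. bx J e)" and finD: "\<And>J. finite (D J)" and Dne: "\<And>J. D J \<noteq> {}"
    and bxne: "\<And>J e. e \<in> D J \<Longrightarrow> bx J e \<noteq> {}"
    and rho: "\<And>J e x y. e \<in> D J \<Longrightarrow> x \<in> bx J e \<Longrightarrow> y \<in> bx J e \<Longrightarrow> dist x y \<le> \<rho> J"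
    and rho0: "\<And>e. 0 < e \<Longrightarrow> \<exists>J0. \<forall>J\<ge>J0. \<rho> J < e"
    and count: "\<And>J V. bounded V \<Longrightarrow> diameter V \<le> 1 \<Longrightarrow>
        real (card {e \<in> D J. bx J e \<subseteq> V}) \<le> C * diameter V powr s0 * real (card (D J))"
    and C1: "1 \<le> C" and s0: "0 < s0" and s: "0 \<le> s" "s \<le> s0"
    and EK: "(\<Inter>J. K J) \<subseteq> E"
    and \<delta>: "0 < \<delta>" "\<delta> \<le> 1/4"
  shows "ennreal (1 / (2 * C * 2 powr s0)) \<le> hausdorff_pre s \<delta> E"
  unfolding hausdorff_pre_def
proof (rule INF_greatest)
  fix U :: "nat \<Rightarrow> 'a set" assume "U \<in> {U. E \<subseteq> (\<Union>i. U i) \<and> (\<forall>i. bounded (U i) \<and> diameter (U i) \<le> \<delta>)}"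
  then have cov: "E \<subseteq> (\<Union>i. U i)" and bU: "\<And>i. bounded (U i)" and dU: "\<And>i. diameter (U i) \<le> \<delta>"
    by auto
  define d where "d i = diameter (U i)" for i
  have d0: "0 \<le> d i" for i using diameter_ge_0[OF bU] by (simp add: d_def)
  have d1: "d i \<le> 1/4" for i using dU[of i] \<delta> by (simp add: d_def)
  define \<epsilon> where "\<epsilon> = 1 / (4 * C * 2 powr s0)"
  have \<epsilon>pos: "0 < \<epsilon>" using C1 by (simp add: \<epsilon>_def)
  define r where "r i = min (1/2) ((\<epsilon> / 2 ^ i) powr (1 / s0)) / 2" for i
  have rpos: "0 < r i" for i using \<epsilon>pos by (simp add: r_def)
  have r1: "2 * r i \<le> 1/2" for i by (simp add: r_def)
  have rs: "(2 * r i) powr s0 \<le> \<epsilon> / 2 ^ i" for i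
  proof -
    have "(2 * r i) powr s0 \<le> ((\<epsilon> / 2 ^ i) powr (1 / s0)) powr s0"
      using rpos[of i] s0 by (intro powr_mono2) (auto simp: r_def)
    also have "\<dots> = \<epsilon> / 2 ^ i" using s0 \<epsilon>pos by (simp add: powr_powr)
    finally show ?thesis .
  qed
  define V where "V i = (\<Union>u\<in>U i. ball u (r i))" for i
  have Vopen: "open (V i)" for i by (auto simp: V_def)
  have Vb: "bounded (V i)" for i
  proof -
    obtain B where B: "\<forall>x\<in>U i. norm x \<le> B" using bU[of i] by (auto simp: bounded_iff)
    have "\<forall>x\<in>V i. norm x \<le> B + r i"
    proof
      fix x assume "x \<in> V i"
      then obtain u where "u \<in> U i" "dist u x < r i" by (auto simp: V_def)
      then show "norm x \<le> B + r i" using B norm_triangle_ineq2[of x u]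
        by (auto simp: dist_norm norm_minus_commute)
    qed
    then show ?thesis by (auto simp: bounded_iff)
  qed
  have dV: "diameter (V i) \<le> d i + 2 * r i" for i
    unfolding V_def d_def by (rule diameter_thicken[OF bU]) (use rpos[of i] in simp)
  have dV0: "0 \<le> diameter (V i)" for i by (rule diameter_ge_0[OF Vb])
  have dV1: "diameter (V i) \<le> 1" for i using dV[of i] d1[of i] r1[of i] by simp
  have dVs: "diameter (V i) powr s0 \<le> 2 powr s0 * (d i powr s + \<epsilon> / 2 ^ i)" for i
  proof -
    have "diameter (V i) powr s0 \<le> 2 powr s0 * (d i powr s + (2 * r i) powr s0)"
      using d0[of i] d1[of i] rpos[of i] s s0 dV0[of i] dV[of i]
      by (intro powr_sum_bound) auto
    also have "\<dots> \<le> 2 powr s0 * (d i powr s + \<epsilon> / 2 ^ i)"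
      using rs[of i] by simp
    finally show ?thesis .
  qed
  have UV: "U i \<subseteq> V i" for i using rpos[of i] by (auto simp: V_def)
  define W where "W N = (\<Union>i<N. V i)" for N
  have Kmono: "J1 \<le> J2 \<Longrightarrow> K J2 \<subseteq> K J1" for J1 J2
    by (induction J2 rule: dec_induct) (use Kdec in auto)
  have "\<exists>J N. K J \<subseteq> W N"
  proof (rule ccontr)
    assume neg: "\<not> (\<exists>J N. K J \<subseteq> W N)"
    define f where "f = (\<lambda>(J, N). K J - W N)"
    have "K 0 \<inter> (\<Inter>i\<in>UNIV. f i) \<noteq> {}"
    proof (rule compact_imp_fip_image[OF K0])
      fix i :: "nat \<times> nat" show "closed (f i)"
        using Kcl Vopen by (auto simp: f_def W_def split: prod.splits intro!: closed_Diff)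
    next
      fix I' :: "(nat \<times> nat) set" assume "finite I'" "I' \<subseteq> UNIV"
      define Jm where "Jm = Max (insert 0 (fst ` I'))"
      define Nm where "Nm = Max (insert 0 (snd ` I'))"
      obtain x where x: "x \<in> K Jm" "x \<notin> W Nm" using neg by blast
      have "x \<in> K 0 \<inter> (\<Inter>i\<in>I'. f i)"
      proof -
        have "x \<in> K 0" using Kmono[of 0 Jm] x by auto
        moreover have "x \<in> f i" if "i \<in> I'" for i
        proof -
          obtain J N where i: "i = (J, N)" by (cases i)
          have "J \<in> insert 0 (fst ` I')" using that i by (metis fst_conv image_eqI insertI2)
          then have "J \<le> Jm" unfolding Jm_def by (rule Max_ge[rotated]) (use \<open>finite I'\<close> in auto)
          have "N \<in> insert 0 (snd ` I')" using that i by (metis snd_conv image_eqI insertI2)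
          then have "N \<le> Nm" unfolding Nm_def by (rule Max_ge[rotated]) (use \<open>finite I'\<close> in auto)
          show ?thesis using \<open>J \<le> Jm\<close> \<open>N \<le> Nm\<close> x Kmono[of J Jm] i by (auto simp: f_def W_def)
        qed
        ultimately show ?thesis by auto
      qed
      then show "K 0 \<inter> (\<Inter>i\<in>I'. f i) \<noteq> {}" by blast
    qed
    then obtain x where x: "x \<in> K 0" "\<And>i. x \<in> f i" by auto
    have "x \<in> (\<Inter>J. K J)" using x(2) by (auto simp: f_def split: prod.splits)
    then have "x \<in> E" using EK by auto
    then obtain i where "x \<in> U i" using cov by auto
    then have "x \<in> W (Suc i)" using UV by (auto simp: W_def)
    then show False using x(2)[of "(0, Suc i)"] by (auto simp: f_def)
  qed
  then obtain J N where KW: "K J \<subseteq> W N" by blast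
  have KJc: "compact (K J)"
  proof -
    have "K J \<subseteq> K 0" by (induction J) (use Kdec in auto)
    then show ?thesis using K0 Kcl compact_Int_closed[of "K 0" "K J"] by (simp add: Int_absorb1)
  qed
  obtain e where e: "0 < e" "\<And>x. x \<in> K J \<Longrightarrow> \<exists>G \<in> V ` {..<N}. ball x e \<subseteq> G"
  proof -
    have "K J \<subseteq> \<Union>(V ` {..<N})" using KW by (simp add: W_def)
    from Heine_Borel_lemma[OF KJc this] Vopen that show ?thesis by blast
  qed
  obtain J0 where J0: "\<forall>J'\<ge>J0. \<rho> J' < e" using rho0[OF e(1)] by blast
  define J' where "J' = max J J0"
  have KJ': "K J' \<subseteq> K J" using Kmono[of J J'] by (simp add: J'_def)
  have rJ': "\<rho> J' < e" using J0 by (simp add: J'_def)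
  have Dcov: "D J' \<subseteq> (\<Union>i<N. {b \<in> D J'. bx J' b \<subseteq> V i})"
  proof
    fix b assume b: "b \<in> D J'"
    obtain x where x: "x \<in> bx J' b" using bxne[OF b] by auto
    then have "x \<in> K J" using KJ' KD[of J'] b by auto
    then obtain i where i: "i < N" "ball x e \<subseteq> V i" using e(2) by auto
    have "bx J' b \<subseteq> ball x e"
    proof
      fix y assume "y \<in> bx J' b"
      then have "dist x y \<le> \<rho> J'" using rho[OF b x] by simp
      then show "y \<in> ball x e" using rJ' by simp
    qed
    then show "b \<in> (\<Union>i<N. {b \<in> D J'. bx J' b \<subseteq> V i})" using i b by auto
  qed
  have "card (D J') \<le> card (\<Union>i<N. {b \<in> D J'. bx J' b \<subseteq> V i})"
    by (rule card_mono[OF _ Dcov]) (use finD in auto)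
  also have "\<dots> \<le> (\<Sum>i<N. card {b \<in> D J'. bx J' b \<subseteq> V i})" by (rule card_UN_le) simp
  finally have "real (card (D J')) \<le> real (\<Sum>i<N. card {b \<in> D J'. bx J' b \<subseteq> V i})"
    by (simp only: of_nat_le_iff)
  also have "\<dots> = (\<Sum>i<N. real (card {b \<in> D J'. bx J' b \<subseteq> V i}))" by (rule of_nat_sum)
  also have "\<dots> \<le> (\<Sum>i<N. C * diameter (V i) powr s0 * real (card (D J')))"
    by (rule sum_mono) (rule count[OF Vb dV1])
  also have "\<dots> = (C * (\<Sum>i<N. diameter (V i) powr s0)) * real (card (D J'))"
    by (simp add: sum_distrib_left sum_distrib_right mult.assoc)
  finally have "1 * real (card (D J')) \<le> (C * (\<Sum>i<N. diameter (V i) powr s0)) * real (card (D J'))"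
    by simp
  moreover have "0 < real (card (D J'))" using finD Dne by (simp add: card_gt_0_iff)
  ultimately have one: "1 \<le> C * (\<Sum>i<N. diameter (V i) powr s0)"
    by (meson mult_le_cancel_right_pos)
  have geo: "(\<Sum>i<N. \<epsilon> / 2 ^ i) \<le> 2 * \<epsilon>"
  proof -
    have "(\<Sum>i<N. \<epsilon> / 2 ^ i) = \<epsilon> * (\<Sum>i<N. (1/2::real) ^ i)"
      unfolding sum_distrib_left by (rule sum.cong) (simp_all add: power_one_over)
    also have "(\<Sum>i<N. (1/2::real) ^ i) = (1 - (1/2) ^ N) / (1 - 1/2)"
      by (simp add: sum_gp_strict)
    also have "\<dots> \<le> 2" by simp
    finally show ?thesis using \<epsilon>pos by simp
  qed
  have "(\<Sum>i<N. diameter (V i) powr s0) \<le> (\<Sum>i<N. 2 powr s0 * (d i powr s + \<epsilon> / 2 ^ i))"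
    by (rule sum_mono) (rule dVs)
  also have "\<dots> = 2 powr s0 * ((\<Sum>i<N. d i powr s) + (\<Sum>i<N. \<epsilon> / 2 ^ i))"
    by (simp add: sum_distrib_left sum.distrib distrib_left)
  also have "\<dots> \<le> 2 powr s0 * ((\<Sum>i<N. d i powr s) + 2 * \<epsilon>)"
    using geo by (intro mult_left_mono) auto
  finally have "1 \<le> C * (2 powr s0 * ((\<Sum>i<N. d i powr s) + 2 * \<epsilon>))"
    using one C1 by (smt (verit) mult_left_mono)
  then have "1 / (C * 2 powr s0) \<le> (\<Sum>i<N. d i powr s) + 2 * \<epsilon>"
    using C1 by (simp add: field_simps)
  then have key: "1 / (2 * C * 2 powr s0) \<le> (\<Sum>i<N. d i powr s)"
    using C1 by (simp add: \<epsilon>_def field_simps)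
  have "ennreal (1 / (2 * C * 2 powr s0)) \<le> ennreal (\<Sum>i<N. d i powr s)"
    using key by (rule ennreal_leI)
  also have "\<dots> = (\<Sum>i<N. ennreal (d i powr s))" by simp
  also have "\<dots> \<le> (\<Sum>i. ennreal (d i powr s))"
    by (rule sum_le_suminf) auto
  finally show "ennreal (1 / (2 * C * 2 powr s0)) \<le> (\<Sum>i. ennreal (diameter (U i) powr s))"
    by (simp add: d_def)
qed

lemma dpow_le_lower:
  fixes d x u :: real
  assumes "0 < x" "x \<le> d" "u \<le> 0"
  shows "d powr u \<le> x powr u"
  using powr_mono2'[OF assms(3) assms(1) assms(2)] .

lemma dpow_le_upper:
  fixes d x u :: real
  assumes "0 < d" "d \<le> x" "0 \<le> u"
  shows "d powr u \<le> x powr u"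
  using assms by (intro powr_mono2) auto

lemma split_pow:
  fixes d u s0 :: real
  assumes "0 < d"
  shows "d powr u = d powr s0 * d powr (u - s0)"
  using assms by (simp add: powr_add[symmetric])

lemma finish:
  fixes d d' R Q K x e s0 :: real
  assumes "0 < d" "0 < R" "0 < Q" "0 \<le> K" "0 \<le> d'"
    and "d' \<le> d powr s0 * R powr x" and "K * R powr (e + x) \<le> Q"
  shows "K * d' * R powr e / Q \<le> d powr s0"
proof -
  have "K * d' * R powr e \<le> K * (d powr s0 * R powr x) * R powr e"
    using assms by (intro mult_right_mono mult_left_mono) auto
  also have "\<dots> = d powr s0 * (K * R powr (e + x))" by (simp add: powr_add)
  also have "\<dots> \<le> d powr s0 * Q" using assms by (intro mult_left_mono) auto
  finally show ?thesis using assms by (simp add: divide_simps)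
qed

lemma lowerfact:
  fixes d R p u s0 :: real
  assumes "0 < R" "R powr p \<le> d" "u \<le> s0"
  shows "d powr u \<le> d powr s0 * R powr (p * (u - s0))"
proof -
  have d: "0 < d" using assms by (smt (verit) powr_gt_zero)
  have "d powr (u - s0) \<le> (R powr p) powr (u - s0)"
    using assms by (intro dpow_le_lower) auto
  then have "d powr (u - s0) \<le> R powr (p * (u - s0))" by (simp add: powr_powr)
  then have "d powr s0 * d powr (u - s0) \<le> d powr s0 * R powr (p * (u - s0))"
    using d by (intro mult_left_mono) auto
  then show ?thesis using split_pow[OF d, of u s0] by simp
qed

lemma upperfact:
  fixes d R p u s0 :: real
  assumes "0 < R" "0 < d" "d \<le> R powr p" "s0 \<le> u"
  shows "d powr u \<le> d powr s0 * R powr (p * (u - s0))"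
proof -
  have "d powr (u - s0) \<le> (R powr p) powr (u - s0)"
    using assms by (intro dpow_le_upper) auto
  then have "d powr (u - s0) \<le> R powr (p * (u - s0))" by (simp add: powr_powr)
  then have "d powr s0 * d powr (u - s0) \<le> d powr s0 * R powr (p * (u - s0))"
    using assms by (intro mult_left_mono) auto
  then show ?thesis using split_pow[OF assms(2), of u s0] by simp
qed

lemma zone4:
  fixes R c d hp1 hpo P1 Po a s0 al :: real and m :: nat
  assumes al: "al = 1/2 + real m * a + (2*a - 1)"
  assumes R1: "1 \<le> R" and c: "0 < c" "c \<le> 1" and hp: "0 < hp1" "0 < hpo"
    and P1: "hp1 / (8 * R powr (1-2*a)) \<le> P1" and Po: "hpo / (4 * R powr (-a)) \<le> Po"
    and d: "R powr (-1) \<le> d" and s0: "1 \<le> s0"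
    and cond: "1024 * 128^m * R powr (s0 - al) \<le> c ^ Suc m * (hp1 * hpo ^ m)"
  shows "64 * d / ((c * R powr (-1/2) / 2) * P1) * (4 / Po) ^ m \<le> d powr s0"
proof -
  have Rp: "0 < R" using R1 by simp
  have dpos: "0 < d" using d Rp by (smt (verit) powr_gt_zero)
  define X where "X = hp1 / (8 * R powr (1-2*a))"
  define Y where "Y = hpo / (4 * R powr (-a))"
  have Xp: "0 < X" and Yp: "0 < Y" using hp Rp by (auto simp: X_def Y_def)
  have P1p: "0 < P1" and Pop: "0 < Po" using P1 Po Xp Yp by (auto simp: X_def Y_def)
  have "64 * d / ((c * R powr (-1/2) / 2) * P1) \<le> 64 * d / ((c * R powr (-1/2) / 2) * X)"
    using P1 Xp c dpos Rp by (intro divide_left_mono mult_left_mono mult_pos_pos) (auto simp: X_def)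
  moreover have "(4 / Po) ^ m \<le> (4 / Y) ^ m"
  proof (intro power_mono divide_left_mono)
    show "Y \<le> Po" using Po by (simp add: Y_def)
  qed (use Yp Pop in auto)
  ultimately have "64 * d / ((c * R powr (-1/2) / 2) * P1) * (4 / Po) ^ m
      \<le> 64 * d / ((c * R powr (-1/2) / 2) * X) * (4 / Y) ^ m"
    using dpos c Rp P1p Pop Xp by (intro mult_mono) auto
  also have "\<dots> = (1024 * 16 ^ m) * d * R powr (3/2 - 2*a - real m * a) / (c * (hp1 * hpo ^ m))"
  proof -
    have e1: "R powr (-1/2) = 1 / R powr (1/2)" using powr_minus_divide[of R "1/2"] by simp
    have e2: "(4 / Y) ^ m = 16 ^ m * (R powr (-a)) ^ m / hpo ^ m"
      by (simp add: Y_def power_divide power_mult_distrib)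
    have e3: "R powr (1/2) * R powr (1-2*a) * (R powr (-a)) ^ m = R powr (3/2 - 2*a - real m * a)"
      using Rp by (simp add: powr_power powr_add[symmetric] algebra_simps)
    show ?thesis unfolding e1 e2 e3[symmetric] using c Rp hp by (simp add: X_def field_simps)
  qed
  also have "\<dots> \<le> d powr s0"
  proof (rule finish[where x = "s0 - 1"])
    show "d \<le> d powr s0 * R powr (s0 - 1)"
      using lowerfact[OF Rp d, of 1 s0] s0 dpos by simp
    have "(1024 * 16 ^ m) * R powr (3/2 - 2*a - real m * a + (s0 - 1)) \<le> 1024 * 128^m * R powr (s0 - al)"
    proof -
      have ex: "3/2 - 2*a - real m * a + (s0 - 1) = s0 - al" using al by (simp add: algebra_simps)
      have "(1024 * 16 ^ m :: real) \<le> 1024 * 128^m" by (simp add: power_mono)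
      then show ?thesis unfolding ex by (intro mult_right_mono) auto
    qed
    also have "\<dots> \<le> c ^ Suc m * (hp1 * hpo ^ m)" by (rule cond)
    also have "\<dots> \<le> c * (hp1 * hpo ^ m)"
      using c hp by (intro mult_right_mono) (auto simp: power_le_one)
    finally show "(1024 * 16 ^ m) * R powr (3/2 - 2*a - real m * a + (s0 - 1)) \<le> c * (hp1 * hpo ^ m)" .
  qed (use dpos Rp c hp in auto)
  finally show ?thesis .
qed

lemma pow_Suc_powr: "0 < (d::real) \<Longrightarrow> d ^ Suc m = d powr (1 + real m)"
  by (metis of_nat_Suc powr_realpow add.commute)

lemma zone3:
  fixes R c d hp1 hpo P1 Po a s0 :: real and m :: nat
  assumes R1: "1 \<le> R" and c: "0 < c" "c \<le> 1" and hp: "0 < hp1" "0 < hpo"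
    and P1: "hp1 / (8 * R powr (1-2*a)) \<le> P1" and Po: "hpo / (4 * R powr (-a)) \<le> Po"
    and d: "0 < d" "d \<le> R powr (-1/2)" and s0: "s0 \<le> 1 + real m"
    and cond: "1024 * 128^m * R powr (3/2 - 2*a - (1 + real m - s0) / 2) \<le> c ^ Suc m * (hp1 * hpo ^ m)"
  shows "64 * d / ((c * R powr (-1/2) / 2) * P1) * (4 * d / (R powr (-a) * Po)) ^ m \<le> d powr s0"
proof -
  have Rp: "0 < R" using R1 by simp
  define X where "X = hp1 / (8 * R powr (1-2*a))"
  define Y where "Y = hpo / (4 * R powr (-a))"
  have Xp: "0 < X" and Yp: "0 < Y" using hp Rp by (auto simp: X_def Y_def)
  have P1p: "0 < P1" and Pop: "0 < Po" using P1 Po Xp Yp by (auto simp: X_def Y_def)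
  have "64 * d / ((c * R powr (-1/2) / 2) * P1) \<le> 64 * d / ((c * R powr (-1/2) / 2) * X)"
    using P1 Xp c d Rp by (intro divide_left_mono mult_left_mono mult_pos_pos) (auto simp: X_def)
  moreover have "(4 * d / (R powr (-a) * Po)) ^ m \<le> (4 * d / (R powr (-a) * Y)) ^ m"
  proof (intro power_mono divide_left_mono mult_left_mono)
    show "Y \<le> Po" using Po by (simp add: Y_def)
  qed (use Yp Pop d Rp in auto)
  ultimately have "64 * d / ((c * R powr (-1/2) / 2) * P1) * (4 * d / (R powr (-a) * Po)) ^ m
      \<le> 64 * d / ((c * R powr (-1/2) / 2) * X) * (4 * d / (R powr (-a) * Y)) ^ m"
    using d c Rp P1p Pop Xp by (intro mult_mono) auto
  also have "\<dots> = (1024 * 16 ^ m) * d ^ Suc m * R powr (3/2 - 2*a) / (c * (hp1 * hpo ^ m))"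
  proof -
    have e1: "R powr (-1/2) = 1 / R powr (1/2)" using powr_minus_divide[of R "1/2"] by simp
    have e2: "4 * d / (R powr (-a) * Y) = 16 * d / hpo"
      using Rp hp by (simp add: Y_def field_simps)
    have e3: "R powr (1/2) * R powr (1-2*a) = R powr (3/2 - 2*a)"
      using Rp by (simp add: powr_add[symmetric] algebra_simps)
    show ?thesis unfolding e1 e2 e3[symmetric] using c Rp hp
      by (simp add: X_def field_simps power_divide power_mult_distrib)
  qed
  also have "\<dots> \<le> d powr s0"
  proof (rule finish[where x = "(-1/2) * (1 + real m - s0)"])
    show "d ^ Suc m \<le> d powr s0 * R powr (-1/2 * (1 + real m - s0))"
      using upperfact[OF Rp d s0] by (simp only: pow_Suc_powr[OF d(1)])
    have ex: "3/2 - 2*a + (-1/2 * (1 + real m - s0)) = 3/2 - 2*a - (1 + real m - s0) / 2"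
      by linarith
    have "(1024 * 16 ^ m) * R powr (3/2 - 2*a + (-1/2 * (1 + real m - s0)))
        \<le> 1024 * 128^m * R powr (3/2 - 2*a - (1 + real m - s0) / 2)"
    proof -
      have "(1024 * 16 ^ m :: real) \<le> 1024 * 128^m" by (simp add: power_mono)
      then show ?thesis unfolding ex by (intro mult_right_mono) auto
    qed
    also have "\<dots> \<le> c ^ Suc m * (hp1 * hpo ^ m)" by (rule cond)
    also have "\<dots> \<le> c * (hp1 * hpo ^ m)"
      using c hp by (intro mult_right_mono) (auto simp: power_le_one)
    finally show "(1024 * 16 ^ m) * R powr (3/2 - 2*a + (-1/2 * (1 + real m - s0))) \<le> c * (hp1 * hpo ^ m)" .
  qed (use d Rp c hp in auto)
  finally show ?thesis .
qed

lemma zone2: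
  fixes R c d hp1 hpo P1 Po a s0 :: real and m :: nat
  assumes R1: "1 \<le> R" and c: "0 < c" "c \<le> 1" and hp: "0 < hp1" "0 < hpo"
    and P1: "hp1 / (8 * R powr (1-2*a)) \<le> P1" and Po: "hpo / (4 * R powr (-a)) \<le> Po"
    and d: "R powr (-1/2) \<le> d" "d \<le> 1"
    and cond1: "1024 * 128^m * R powr (3/2 - 2*a - (1 + real m - s0) / 2) \<le> c ^ Suc m * (hp1 * hpo ^ m)"
    and cond2: "1024 * 128^m * R powr (1 - 2*a) \<le> c ^ Suc m * (hp1 * hpo ^ m)"
  shows "4 / P1 * (4 * d / (R powr (-a) * Po)) ^ m \<le> d powr s0"
proof -
  have Rp: "0 < R" using R1 by simp
  have dpos: "0 < d" using d Rp by (smt (verit) powr_gt_zero)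
  define X where "X = hp1 / (8 * R powr (1-2*a))"
  define Y where "Y = hpo / (4 * R powr (-a))"
  have Xp: "0 < X" and Yp: "0 < Y" using hp Rp by (auto simp: X_def Y_def)
  have P1p: "0 < P1" and Pop: "0 < Po" using P1 Po Xp Yp by (auto simp: X_def Y_def)
  have "4 / P1 \<le> 4 / X"
  proof (rule divide_left_mono)
    show "X \<le> P1" using P1 by (simp add: X_def)
  qed (use P1p Xp in auto)
  moreover have "(4 * d / (R powr (-a) * Po)) ^ m \<le> (4 * d / (R powr (-a) * Y)) ^ m"
  proof (intro power_mono divide_left_mono mult_left_mono)
    show "Y \<le> Po" using Po by (simp add: Y_def)
  qed (use Yp Pop dpos Rp in auto)
  ultimately have "4 / P1 * (4 * d / (R powr (-a) * Po)) ^ m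
      \<le> 4 / X * (4 * d / (R powr (-a) * Y)) ^ m"
    using dpos Rp P1p Pop Xp by (intro mult_mono) auto
  also have "\<dots> = (32 * 16 ^ m) * d ^ m * R powr (1 - 2*a) / (hp1 * hpo ^ m)"
  proof -
    have e2: "4 * d / (R powr (-a) * Y) = 16 * d / hpo"
      using Rp hp by (simp add: Y_def field_simps)
    show ?thesis unfolding e2 using c Rp hp
      by (simp add: X_def field_simps power_divide power_mult_distrib)
  qed
  also have "\<dots> \<le> d powr s0"
  proof (cases "s0 \<le> real m")
    case True
    show ?thesis
    proof (rule finish[where x = 0])
      have "d powr real m \<le> d powr s0" using True dpos d by (intro powr_mono') auto
      then show "d ^ m \<le> d powr s0 * R powr 0" using dpos Rp by (simp add: powr_realpow)
      have "(32 * 16 ^ m) * R powr (1 - 2*a + 0) \<le> 1024 * 128^m * R powr (1 - 2*a)"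
      proof -
        have "(32 * 16 ^ m :: real) \<le> 1024 * 128^m" by (intro mult_mono power_mono) auto
        moreover have "0 \<le> R powr (1 - 2*a)" by simp
        ultimately show ?thesis by (simp only: add_0_right) (rule mult_right_mono)
      qed
      also have "\<dots> \<le> c ^ Suc m * (hp1 * hpo ^ m)" by (rule cond2)
      also have "\<dots> \<le> (hp1 * hpo ^ m)"
        using c hp power_le_one[of c "Suc m"] by (intro mult_left_le_one_le) (auto simp del: power_Suc)
      finally show "(32 * 16 ^ m) * R powr (1 - 2*a + 0) \<le> hp1 * hpo ^ m" .
    qed (use dpos Rp c hp in auto)
  next
    case False
    show ?thesis
    proof (rule finish[where x = "(-1/2) * (real m - s0)"])
      show "d ^ m \<le> d powr s0 * R powr (-1/2 * (real m - s0))"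
        using lowerfact[OF Rp d(1), of "real m" s0] False dpos by (simp add: powr_realpow)
      have ex: "1 - 2*a + (-1/2 * (real m - s0)) = 3/2 - 2*a - (1 + real m - s0) / 2"
        by (simp add: field_simps)
      have "(32 * 16 ^ m) * R powr (1 - 2*a + (-1/2 * (real m - s0)))
          \<le> 1024 * 128^m * R powr (3/2 - 2*a - (1 + real m - s0) / 2)"
      proof -
        have "(32 * 16 ^ m :: real) \<le> 1024 * 128^m" by (intro mult_mono power_mono) auto
        then show ?thesis unfolding ex by (intro mult_right_mono) auto
      qed
      also have "\<dots> \<le> c ^ Suc m * (hp1 * hpo ^ m)" by (rule cond1)
      also have "\<dots> \<le> (hp1 * hpo ^ m)"
        using c hp power_le_one[of c "Suc m"] by (intro mult_left_le_one_le) (auto simp del: power_Suc)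
      finally show "(32 * 16 ^ m) * R powr (1 - 2*a + (-1/2 * (real m - s0))) \<le> hp1 * hpo ^ m" .
    qed (use dpos Rp c hp in auto)
  qed
  finally show ?thesis .
qed

lemma zone5:
  fixes R c d hp1 hpo P1 Po a s0 al :: real and m :: nat
  assumes al: "al = 1/2 + real m * a + (2*a - 1)"
  assumes R1: "1 \<le> R" and c: "0 < c" "c \<le> 1" and hp: "0 < hp1" "0 < hpo"
    and P1: "hp1 / (8 * R powr (1-2*a)) \<le> P1" and Po: "hpo / (4 * R powr (-a)) \<le> Po"
    and d: "0 < d" "d \<le> R powr (-1)" and s0: "s0 \<le> 1 + real m"
    and cond: "1024 * 128^m * R powr (s0 - al) \<le> c ^ Suc m * (hp1 * hpo ^ m)"
  shows "16 * d / ((c * R powr (-1/2) / 2) * P1) * (16 * d / ((c * R powr (-1) / 2) * Po)) ^ m \<le> d powr s0"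
proof -
  have Rp: "0 < R" using R1 by simp
  define X where "X = hp1 / (8 * R powr (1-2*a))"
  define Y where "Y = hpo / (4 * R powr (-a))"
  have Xp: "0 < X" and Yp: "0 < Y" using hp Rp by (auto simp: X_def Y_def)
  have P1p: "0 < P1" and Pop: "0 < Po" using P1 Po Xp Yp by (auto simp: X_def Y_def)
  have "16 * d / ((c * R powr (-1/2) / 2) * P1) \<le> 16 * d / ((c * R powr (-1/2) / 2) * X)"
    using P1 Xp c d Rp by (intro divide_left_mono mult_left_mono mult_pos_pos) (auto simp: X_def)
  moreover have "(16 * d / ((c * R powr (-1) / 2) * Po)) ^ m \<le> (16 * d / ((c * R powr (-1) / 2) * Y)) ^ m"
  proof (intro power_mono divide_left_mono mult_left_mono)
    show "Y \<le> Po" using Po by (simp add: Y_def)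
  qed (use Yp Pop d Rp c in auto)
  ultimately have "16 * d / ((c * R powr (-1/2) / 2) * P1) * (16 * d / ((c * R powr (-1) / 2) * Po)) ^ m
      \<le> 16 * d / ((c * R powr (-1/2) / 2) * X) * (16 * d / ((c * R powr (-1) / 2) * Y)) ^ m"
    using d c Rp P1p Pop Xp by (intro mult_mono) auto
  also have "\<dots> = (256 * 128 ^ m) * d ^ Suc m * R powr (3/2 - 2*a + real m - real m * a) / (c ^ Suc m * (hp1 * hpo ^ m))"
  proof -
    have e1: "R powr (-1/2) = 1 / R powr (1/2)" using powr_minus_divide[of R "1/2"] by simp
    have e1': "R powr (-1) = 1 / R" using powr_minus_divide[of R 1] Rp by simp
    have e2: "16 * d / ((c * (1 / R) / 2) * Y) = 128 * d * (R * R powr (-a)) / (c * hpo)"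
      using Rp hp c by (simp add: Y_def field_simps)
    have e3: "R powr (1/2) * R powr (1-2*a) * (R * R powr (-a)) ^ m = R powr (3/2 - 2*a + real m - real m * a)"
    proof -
      have "R powr (1 - a) = R powr 1 / R powr a" by (rule powr_diff)
      moreover have "R powr 1 = R" using Rp by simp
      moreover have "R powr (-a) = 1 / R powr a" by (rule powr_minus_divide)
      ultimately have "R * R powr (-a) = R powr (1 - a)" by simp
      then have "(R * R powr (-a)) ^ m = R powr (real m * (1 - a))" using Rp by (simp add: powr_power)
      then show ?thesis using Rp by (simp add: powr_add[symmetric] algebra_simps)
    qed
    show ?thesis unfolding e1 e1' e2 e3[symmetric] using c Rp hp
      by (simp add: X_def field_simps power_divide power_mult_distrib)
  qed
  also have "\<dots> \<le> d powr s0"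
  proof (rule finish[where x = "(-1) * (1 + real m - s0)"])
    show "d ^ Suc m \<le> d powr s0 * R powr (-1 * (1 + real m - s0))"
      using upperfact[OF Rp d s0] by (simp only: pow_Suc_powr[OF d(1)])
    have ex: "3/2 - 2*a + real m - real m * a + (-1 * (1 + real m - s0)) = s0 - al"
      using al by (simp add: algebra_simps)
    have "(256 * 128 ^ m) * R powr (3/2 - 2*a + real m - real m * a + (-1 * (1 + real m - s0)))
        \<le> 1024 * 128^m * R powr (s0 - al)"
      unfolding ex by (intro mult_right_mono) auto
    also have "\<dots> \<le> c ^ Suc m * (hp1 * hpo ^ m)" by (rule cond)
    finally show "(256 * 128 ^ m) * R powr (3/2 - 2*a + real m - real m * a + (-1 * (1 + real m - s0))) \<le> c ^ Suc m * (hp1 * hpo ^ m)" .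
  qed (use d Rp c hp in auto)
  finally show ?thesis .
qed

lemma zone_top:
  fixes d c0 s0 :: real and m :: nat
  assumes "0 < c0" "0 < d" "d \<le> 1" "s0 \<le> 1 + real m"
  shows "16 * d / (c0 / 2 * 1) * (16 * d / (c0 / 2 * 1)) ^ m \<le> (32 / c0) ^ Suc m * d powr s0"
proof -
  have "16 * d / (c0 / 2 * 1) * (16 * d / (c0 / 2 * 1)) ^ m = (32 / c0) ^ Suc m * d ^ Suc m"
    using assms by (simp add: field_simps power_mult_distrib)
  also have "d ^ Suc m \<le> d powr s0"
    using assms powr_mono'[of s0 "1 + real m" d] by (simp only: pow_Suc_powr[OF assms(2)])
  then have "(32 / c0) ^ Suc m * d ^ Suc m \<le> (32 / c0) ^ Suc m * d powr s0"
    using assms by (intro mult_left_mono) auto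
  finally show ?thesis .
qed

lemma ev_pow:
  fixes A B e :: real
  assumes "e < 0" "0 < B" "0 \<le> A"
  shows "eventually (\<lambda>k. A * ((2::real) ^ k) powr e \<le> B) sequentially"
proof (cases "A = 0")
  case True then show ?thesis using assms by simp
next
  case False
  then have A: "0 < A" using assms by simp
  define T where "T = (B / A) powr (1 / e)"
  have Tp: "0 < T" using A assms by (simp add: T_def)
  obtain N where N: "T < 2 ^ N" using real_arch_pow[of 2 T] by auto
  show ?thesis
  proof (rule eventually_sequentiallyI[of N])
    fix k assume "N \<le> k"
    then have "(2::real) ^ N \<le> 2 ^ k" by (rule power_increasing) simp
    then have "T \<le> 2 ^ k" using N by linarith
    then have "((2::real) ^ k) powr e \<le> T powr e" using powr_mono2'[of e T "2^k"] assms Tp by simp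
    also have "T powr e = B / A" using A assms by (simp add: T_def powr_powr)
    finally show "A * ((2::real) ^ k) powr e \<le> B" using A by (simp add: field_simps)
  qed
qed

lemma (in tree1) h_decay: "h j \<le> h 0 / 2 ^ j"
proof (induction j)
  case 0 then show ?case by simp
next
  case (Suc j)
  have "h (Suc j) \<le> h j / 2" by (rule h_half)
  also have "\<dots> \<le> h 0 / 2 ^ j / 2" using Suc by simp
  finally show ?case by simp
qed

lemma (in tree1) P_0: "P 0 = 1" by (simp add: P_def)

locale construct =
  fixes i1 :: "'n::finite" and a c c0 s0 :: real and m :: nat
  assumes m_def: "m = CARD('n) - 1" and n2: "2 \<le> CARD('n)" and a1: "1/2 < a" and a2: "a \<le> 3/4"
    and c1: "0 < c" and c2: "c \<le> 1/2" and c01: "0 < c0" and c02: "c0 \<le> 1"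
    and s01: "1 \<le> s0" and s02: "s0 < 1/2 + real (CARD('n) - 1) * a + (2*a - 1)"
begin


definition al :: real where "al = 1/2 + real m * a + (2*a - 1)"
definition Kz :: real where "Kz = 1024 * 128 ^ m"
definition h1f :: "nat \<Rightarrow> nat \<Rightarrow> real" where
  "h1f j kp = (if j = 0 then c0/2 else c * ((2::real)^kp) powr (-1/2) / 2)"
definition hof :: "nat \<Rightarrow> nat \<Rightarrow> real" where
  "hof j kp = (if j = 0 then c0/2 else c * ((2::real)^kp) powr (-1) / 2)"

definition good :: "nat \<Rightarrow> nat \<Rightarrow> nat \<Rightarrow> bool" where
  "good j kp kn \<longleftrightarrow>
     c * ((2::real)^kn) powr (-1/2) \<le> h1f j kp \<and>
     c * ((2::real)^kn) powr (-1) \<le> hof j kp \<and>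
     4 * ((2::real)^kn) powr (1 - 2*a) \<le> h1f j kp \<and>
     2 * ((2::real)^kn) powr (-a) \<le> hof j kp \<and>
     (2 * (2::real)^kp) * ((2::real)^kn) powr (1 - 2*a) \<le> 1 \<and>
     Kz * ((2::real)^kn) powr (s0 - al) \<le> c ^ Suc m * (h1f j kp * hof j kp ^ m) \<and>
     Kz * ((2::real)^kn) powr (3/2 - 2*a - (1 + real m - s0) / 2) \<le> c ^ Suc m * (h1f j kp * hof j kp ^ m) \<and>
     Kz * ((2::real)^kn) powr (1 - 2*a) \<le> c ^ Suc m * (h1f j kp * hof j kp ^ m)"

lemma m1: "1 \<le> m" using n2 m_def by simp

lemma h1f_pos: "0 < h1f j kp" using c1 c01 by (simp add: h1f_def)
lemma hof_pos: "0 < hof j kp" using c1 c01 by (simp add: hof_def)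
lemma Kz_pos: "0 \<le> Kz" by (simp add: Kz_def)

lemma al_gt: "1 < al"
proof -
  have "1 * a \<le> real m * a" using m1 a1 by (intro mult_right_mono) auto
  then show ?thesis using a1 unfolding al_def by linarith
qed

lemma m_real: "real m = real CARD('n) - 1" using m_def n2 by (simp add: of_nat_diff)

lemma s0_al: "s0 < al" using s02 unfolding al_def m_real by simp

lemma e3_neg: "3/2 - 2*a - (1 + real m - s0) / 2 < 0"
proof -
  have "1 * (1 - a) \<le> real m * (1 - a)" using m1 a2 by (intro mult_right_mono) auto
  then have "al \<le> real m + 4*a - 2" using a1 by (simp add: al_def algebra_simps)
  then show ?thesis using s0_al by (simp add: field_simps)
qed

lemma good_ex: "\<exists>kn. kp < kn \<and> good j kp kn"
proof -
  have H: "0 < c ^ Suc m * (h1f j kp * hof j kp ^ m)"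
    using c1 h1f_pos hof_pos by simp
  have "eventually (\<lambda>kn. good j kp kn) sequentially"
    unfolding good_def
    using a1 c1 h1f_pos hof_pos Kz_pos s0_al e3_neg H
    by (intro eventually_conj ev_pow) auto
  then obtain N where N: "\<And>kn. N \<le> kn \<Longrightarrow> good j kp kn" by (auto simp: eventually_sequentially)
  show ?thesis using N[of "max N (Suc kp)"] by (intro exI[of _ "max N (Suc kp)"]) auto
qed

primrec kseq :: "nat \<Rightarrow> nat" where
  "kseq 0 = 0"
| "kseq (Suc j) = (SOME kn. kseq j < kn \<and> good j (kseq j) kn)"

lemma kseq_step: "kseq j < kseq (Suc j) \<and> good j (kseq j) (kseq (Suc j))"
  using someI_ex[OF good_ex[of "kseq j" j]] by simp

lemma kseq_ge: "j \<le> kseq j"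
proof (induction j)
  case 0 then show ?case by simp
next
  case (Suc j) then show ?case using kseq_step[of j] by simp
qed

definition R :: "nat \<Rightarrow> real" where "R j = 2 ^ kseq j"
definition h1 :: "nat \<Rightarrow> real" where "h1 j = h1f j (kseq j)"
definition ho :: "nat \<Rightarrow> real" where "ho j = hof j (kseq j)"
definition s1 :: "nat \<Rightarrow> real" where "s1 j = (if j = 0 then c0/2 else 2 * R j powr (1 - 2*a))"
definition so :: "nat \<Rightarrow> real" where "so j = (if j = 0 then c0/2 else R j powr (-a))"

lemma R_ge1: "1 \<le> R j" by (simp add: R_def)
lemma R_pos: "0 < R j" by (simp add: R_def)

lemma h1_Suc: "h1 (Suc j) = c * R (Suc j) powr (-1/2) / 2" by (simp add: h1_def h1f_def R_def)
lemma ho_Suc: "ho (Suc j) = c * R (Suc j) powr (-1) / 2" by (simp add: ho_def hof_def R_def)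
lemma s1_Suc: "s1 (Suc j) = 2 * R (Suc j) powr (1 - 2*a)" by (simp add: s1_def)
lemma so_Suc: "so (Suc j) = R (Suc j) powr (-a)" by (simp add: so_def)
lemma h1_0: "h1 0 = c0/2" by (simp add: h1_def h1f_def)
lemma ho_0: "ho 0 = c0/2" by (simp add: ho_def hof_def)

lemma good_R:
  "c * R (Suc j) powr (-1/2) \<le> h1 j"
  "c * R (Suc j) powr (-1) \<le> ho j"
  "4 * R (Suc j) powr (1 - 2*a) \<le> h1 j"
  "2 * R (Suc j) powr (-a) \<le> ho j"
  "(2 * R j) * R (Suc j) powr (1 - 2*a) \<le> 1"
  "Kz * R (Suc j) powr (s0 - al) \<le> c ^ Suc m * (h1 j * ho j ^ m)"
  "Kz * R (Suc j) powr (3/2 - 2*a - (1 + real m - s0) / 2) \<le> c ^ Suc m * (h1 j * ho j ^ m)"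
  "Kz * R (Suc j) powr (1 - 2*a) \<le> c ^ Suc m * (h1 j * ho j ^ m)"
  using kseq_step[of j] unfolding good_def R_def h1_def ho_def by auto

lemma h1_pos: "0 < h1 j" by (simp add: h1_def h1f_pos)
lemma ho_pos: "0 < ho j" by (simp add: ho_def hof_pos)
lemma s1_pos: "0 < s1 j" using c01 R_pos[of j] by (simp add: s1_def)
lemma so_pos: "0 < so j" using c01 R_pos[of j] by (simp add: so_def)

lemma so_le_s1: "1 \<le> j \<Longrightarrow> so j \<le> s1 j"
proof -
  assume "1 \<le> j"
  then have "so j = R j powr (-a)" "s1 j = 2 * R j powr (1 - 2*a)" by (auto simp: so_def s1_def)
  moreover have "R j powr (-a) \<le> R j powr (1 - 2*a)" using R_ge1[of j] a2 by (intro powr_mono) auto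
  moreover have "0 \<le> R j powr (1 - 2*a)" by simp
  ultimately show ?thesis by linarith
qed

lemma tree_x: "tree1 s1 h1"
proof
  fix j
  show "0 < s1 j" by (rule s1_pos)
  show "0 < h1 j" by (rule h1_pos)
  show "h1 (Suc j) \<le> h1 j / 2" using good_R(1)[of j] by (simp add: h1_Suc)
  show "2 * s1 (Suc j) \<le> h1 j" using good_R(3)[of j] by (simp add: s1_Suc)
next
  fix j :: nat assume j: "1 \<le> j"
  then obtain i where i: "j = Suc i" by (cases j) auto
  have "R j powr (-1/2) \<le> R j powr (1 - 2*a)" using R_ge1[of j] a2 by (intro powr_mono) auto
  moreover have X: "0 < R j powr (-1/2)" using R_pos[of j] by simp
  moreover have "c * R j powr (-1/2) \<le> 1/2 * R j powr (-1/2)" using c2 X by (intro mult_right_mono) auto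
  moreover have "2 * h1 j = c * R j powr (-1/2)" by (simp add: i h1_Suc)
  moreover have "s1 j = 2 * R j powr (1 - 2*a)" by (simp add: i s1_Suc)
  ultimately show "2 * h1 j < s1 j" by linarith
qed

lemma tree_o: "tree1 so ho"
proof
  fix j
  show "0 < so j" by (rule so_pos)
  show "0 < ho j" by (rule ho_pos)
  show "ho (Suc j) \<le> ho j / 2" using good_R(2)[of j] by (simp add: ho_Suc)
  show "2 * so (Suc j) \<le> ho j" using good_R(4)[of j] by (simp add: so_Suc)
next
  fix j :: nat assume j: "1 \<le> j"
  then obtain i where i: "j = Suc i" by (cases j) auto
  have "R j powr (-1) \<le> R j powr (-a)" using R_ge1[of j] a2 by (intro powr_mono) auto
  moreover have X: "0 < R j powr (-1)" using R_pos[of j] by simp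
  moreover have "c * R j powr (-1) \<le> 1/2 * R j powr (-1)" using c2 X by (intro mult_right_mono) auto
  moreover have "2 * ho j = c * R j powr (-1)" by (simp add: i ho_Suc)
  moreover have "so j = R j powr (-a)" by (simp add: i so_Suc)
  ultimately show "2 * ho j < so j" by linarith
qed

interpretation tx: tree1 s1 h1 by (rule tree_x)
interpretation tw: tree1 so ho by (rule tree_o)

lemma s0_le: "s0 \<le> 1 + real m"
proof -
  have "real m * a \<le> real m * (3/4)" using a2 by (intro mult_left_mono) auto
  then have "al \<le> 1 + real m" using a2 m1 unfolding al_def by linarith
  then show ?thesis using s0_al by simp
qed

lemma Cc1: "1 \<le> (32 / c0) ^ Suc m"
proof -
  have "1 \<le> 32 / c0" using c01 c02 by (simp add: field_simps)
  then show ?thesis by (rule one_le_power)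
qed

lemma pick:
  fixes A B X Y :: real and f g :: "nat \<Rightarrow> real \<Rightarrow> real"
  assumes "0 \<le> A" "0 \<le> B" "A * B ^ m \<le> X" "X \<le> Y" "\<And>J y. f J y \<le> A" "\<And>J y. g J y \<le> B"
  shows "\<exists>\<beta>1 \<beta>o. 0 \<le> \<beta>1 \<and> 0 \<le> \<beta>o \<and> \<beta>1 * \<beta>o ^ m \<le> Y \<and> (\<forall>J y. f J y \<le> \<beta>1) \<and> (\<forall>J y. g J y \<le> \<beta>o)"
  using assms by (intro exI[of _ A] exI[of _ B]) auto

lemma zone_bound:
  assumes d: "0 < d" "d \<le> 1"
  shows "\<exists>\<beta>1 \<beta>o. 0 \<le> \<beta>1 \<and> 0 \<le> \<beta>o \<and> \<beta>1 * \<beta>o ^ m \<le> (32 / c0) ^ Suc m * d powr s0 \<and>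
    (\<forall>J y. tx.nu J y d \<le> \<beta>1) \<and> (\<forall>J y. tw.nu J y d \<le> \<beta>o)"
proof -
  have ex: "\<exists>L. s1 (Suc L) \<le> d"
  proof -
    obtain L where L: "c0 / d < 2 ^ L" using real_arch_pow[of 2 "c0 / d"] by auto
    have "s1 (Suc L) \<le> h1 L / 2" using tx.h_big[of L] by simp
    also have "\<dots> \<le> h1 0 / 2 ^ L / 2" using tx.h_decay[of L] by simp
    also have "\<dots> \<le> c0 / 2 ^ L" using c01 by (simp add: h1_0 field_simps)
    also have "\<dots> \<le> d" using L d by (simp add: field_simps)
    finally show ?thesis by blast
  qed
  define L0 where "L0 = (LEAST L. s1 (Suc L) \<le> d)"
  have L0: "s1 (Suc L0) \<le> d" unfolding L0_def by (rule LeastI_ex[OF ex])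
  have sdm: "s0 \<le> 1 + real m" by (rule s0_le)
  show ?thesis
  proof (cases L0)
    case 0
    define \<beta> where "\<beta> = 16 * d / (c0 / 2 * 1)"
    have b1: "tx.nu J y d \<le> \<beta>" for J y
      using tx.nu_big[of 0 d J y] L0 0 by (simp add: \<beta>_def h1_0 tx.P_0)
    have b2: "tw.nu J y d \<le> \<beta>" for J y
    proof -
      have "so (Suc 0) \<le> d" using so_le_s1[of "Suc 0"] L0 0 by simp
      then show ?thesis using tw.nu_big[of 0 d J y] by (simp add: \<beta>_def ho_0 tw.P_0)
    qed
    have "\<beta> * \<beta> ^ m \<le> (32 / c0) ^ Suc m * d powr s0"
      unfolding \<beta>_def by (rule zone_top) (use c01 d sdm in auto)
    moreover have "0 \<le> \<beta>" using d c01 by (simp add: \<beta>_def)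
    ultimately show ?thesis using b1 b2 by blast
  next
    case (Suc j)
    define Rr where "Rr = R (Suc j)"
    have Rr1: "1 \<le> Rr" and Rrp: "0 < Rr" using R_ge1 R_pos by (auto simp: Rr_def)
    have nL: "\<not> s1 (Suc j) \<le> d" using not_less_Least[of j "\<lambda>L. s1 (Suc L) \<le> d"] Suc
      by (simp add: L0_def)
    then have dup: "d \<le> 2 * Rr powr (1 - 2*a)" by (simp add: s1_Suc Rr_def)
    have dlow: "s1 (Suc (Suc j)) \<le> d" using L0 Suc by simp
    have sRr: "s1 (Suc (Suc j)) \<le> Rr powr (-1)"
    proof -
      have "(2 * Rr) * R (Suc (Suc j)) powr (1 - 2*a) \<le> 1" using good_R(5)[of "Suc j"] by (simp add: Rr_def)
      then have "2 * R (Suc (Suc j)) powr (1 - 2*a) \<le> 1 / Rr" using Rrp by (simp add: field_simps)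
      then show ?thesis using Rrp by (simp add: s1_Suc powr_minus_divide)
    qed
    have P1: "h1 j / (8 * Rr powr (1 - 2*a)) \<le> real (tx.P (Suc j))"
      using tx.P_lower[of j] by (simp add: s1_Suc Rr_def)
    have Po: "ho j / (4 * Rr powr (-a)) \<le> real (tw.P (Suc j))"
      using tw.P_lower[of j] by (simp add: so_Suc Rr_def)
    have cc: "0 < c" "c \<le> 1" using c1 c2 by auto
    have hh: "0 < h1 j" "0 < ho j" using h1_pos ho_pos by auto
    have g6: "1024 * 128 ^ m * Rr powr (s0 - al) \<le> c ^ Suc m * (h1 j * ho j ^ m)"
      using good_R(6)[of j] by (simp add: Kz_def Rr_def)
    have g7: "1024 * 128 ^ m * Rr powr (3/2 - 2*a - (1 + real m - s0) / 2) \<le> c ^ Suc m * (h1 j * ho j ^ m)"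
      using good_R(7)[of j] by (simp add: Kz_def Rr_def)
    have g8: "1024 * 128 ^ m * Rr powr (1 - 2*a) \<le> c ^ Suc m * (h1 j * ho j ^ m)"
      using good_R(8)[of j] by (simp add: Kz_def Rr_def)
    have P1p: "0 < real (tx.P (Suc j))" using tx.P_pos by simp
    have Pop: "0 < real (tw.P (Suc j))" using tw.P_pos by simp
    have ord1: "Rr powr (-1) \<le> Rr powr (-a)" using Rr1 a2 by (intro powr_mono) auto
    have ord2: "Rr powr (-a) \<le> Rr powr (-1/2)" using Rr1 a1 by (intro powr_mono) auto
    have Cc: "d powr s0 \<le> (32 / c0) ^ Suc m * d powr s0"
    proof -
      have "1 * d powr s0 \<le> (32 / c0) ^ Suc m * d powr s0" by (rule mult_right_mono[OF Cc1]) simp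
      then show ?thesis by (simp only: mult_1)
    qed
    have soSS: "so (Suc (Suc j)) \<le> d" using so_le_s1[of "Suc (Suc j)"] dlow by simp
    have mid: "tx.nu J y d \<le> 64 * d / ((c * Rr powr (-1/2) / 2) * real (tx.P (Suc j)))" for J y
      using tx.nu_mid[of "Suc j" d J y] nL dlow by (simp add: h1_Suc Rr_def)
    have bigx: "tx.nu J y d \<le> 16 * d / ((c * Rr powr (-1/2) / 2) * real (tx.P (Suc j)))" for J y
      using tx.nu_big[of "Suc j" d J y] dlow by (simp add: h1_Suc Rr_def)
    have smallx: "tx.nu J y d \<le> 4 / real (tx.P (Suc j))" for J y
      using tx.nu_small[of "Suc j" d J y] nL d by simp
    have bigo: "tw.nu J y d \<le> 16 * d / ((c * Rr powr (-1) / 2) * real (tw.P (Suc j)))" for J y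
      using tw.nu_big[of "Suc j" d J y] soSS by (simp add: ho_Suc Rr_def)
    have posb: "0 < c * Rr powr (-1/2) / 2" "0 < c * Rr powr (-1) / 2" "0 < Rr powr (-a)"
      using cc Rrp by auto
    show ?thesis
    proof (cases "d \<le> Rr powr (-1)")
      case True
      have "16 * d / ((c * Rr powr (-1/2) / 2) * real (tx.P (Suc j))) *
          (16 * d / ((c * Rr powr (-1) / 2) * real (tw.P (Suc j)))) ^ m \<le> d powr s0"
        by (rule zone5[OF al_def Rr1 cc hh P1 Po _ True sdm g6]) (use d in simp)
      note zr = this
        show ?thesis
        proof (rule pick[OF _ _ zr Cc])
          show "0 \<le> 16 * d / ((c * Rr powr (-1/2) / 2) * real (tx.P (Suc j)))" using d posb P1p Pop cc by simp
          show "0 \<le> 16 * d / ((c * Rr powr (-1) / 2) * real (tw.P (Suc j)))" using d posb P1p Pop cc by simp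
        qed (use bigx bigo Cc d posb P1p Pop in auto)
    next
      case F1: False
      show ?thesis
      proof (cases "d \<le> Rr powr (-a)")
        case True
        have zr: "64 * d / ((c * Rr powr (-1/2) / 2) * real (tx.P (Suc j))) * (4 / real (tw.P (Suc j))) ^ m \<le> d powr s0"
          by (rule zone4[OF al_def Rr1 cc hh P1 Po _ s01 g6]) (use F1 in simp)
        have smo: "tw.nu J y d \<le> 4 / real (tw.P (Suc j))" for J y
          using tw.nu_small[of "Suc j" d J y] True d by (simp add: so_Suc Rr_def)
        show ?thesis
        proof (rule pick[OF _ _ zr Cc])
          show "0 \<le> 64 * d / ((c * Rr powr (-1/2) / 2) * real (tx.P (Suc j)))" using d posb P1p Pop cc by simp
          show "0 \<le> 4 / real (tw.P (Suc j))" using d posb P1p Pop cc by simp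
        qed (use mid smo in auto)
      next
        case F2: False
        have bho: "tw.nu J y d \<le> 4 * d / (Rr powr (-a) * real (tw.P (Suc j)))" for J y
          using tw.nu_big_here[of "Suc j" d J y] F2 by (simp add: so_Suc Rr_def)
        show ?thesis
        proof (cases "d \<le> Rr powr (-1/2)")
          case True
          have "64 * d / ((c * Rr powr (-1/2) / 2) * real (tx.P (Suc j))) *
              (4 * d / (Rr powr (-a) * real (tw.P (Suc j)))) ^ m \<le> d powr s0"
            by (rule zone3[OF Rr1 cc hh P1 Po _ True sdm g7]) (use d in simp)
          note zr = this
        show ?thesis
        proof (rule pick[OF _ _ zr Cc])
          show "0 \<le> 64 * d / ((c * Rr powr (-1/2) / 2) * real (tx.P (Suc j)))" using d posb P1p Pop cc by simp
          show "0 \<le> 4 * d / (Rr powr (-a) * real (tw.P (Suc j)))" using d posb P1p Pop cc by simp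
        qed (use mid bho Cc d posb P1p Pop in auto)
        next
          case F3: False
          have "4 / real (tx.P (Suc j)) * (4 * d / (Rr powr (-a) * real (tw.P (Suc j)))) ^ m \<le> d powr s0"
            by (rule zone2[OF Rr1 cc hh P1 Po _ d(2) g7 g8]) (use F3 in simp)
          note zr = this
        show ?thesis
        proof (rule pick[OF _ _ zr Cc])
          show "0 \<le> 4 / real (tx.P (Suc j))" using d posb P1p Pop cc by simp
          show "0 \<le> 4 * d / (Rr powr (-a) * real (tw.P (Suc j)))" using d posb P1p Pop cc by simp
        qed (use smallx bho Cc d posb P1p Pop in auto)
        qed
      qed
    qed
  qed
qed

definition sp :: "'n \<Rightarrow> nat \<Rightarrow> real" where "sp i = (if i = i1 then s1 else so)"
definition hp :: "'n \<Rightarrow> nat \<Rightarrow> real" where "hp i = (if i = i1 then h1 else ho)"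

lemma tree_i: "tree1 (sp i) (hp i)"
  using tree_x tree_o by (simp add: sp_def hp_def)

definition D :: "nat \<Rightarrow> ('n \<Rightarrow> nat list) set" where
  "D J = (\<Pi>\<^sub>E i\<in>UNIV. tree1.Dig (sp i) (hp i) J)"
definition bx :: "nat \<Rightarrow> ('n \<Rightarrow> nat list) \<Rightarrow> (real ^ 'n) set" where
  "bx J E = {x. \<forall>i. x $ i \<in> tree1.Iv (sp i) (hp i) (E i)}"
definition K :: "nat \<Rightarrow> (real ^ 'n) set" where
  "K J = (\<Union>E\<in>D J. bx J E)"
definition rho :: "nat \<Rightarrow> real" where "rho J = (\<Sum>i\<in>UNIV. 2 * hp i J)"

lemma finite_D: "finite (D J)"
  unfolding D_def by (intro finite_PiE) (auto intro: tree1.finite_Dig[OF tree_i])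

lemma Dig_ne: "tree1.Dig (sp i) (hp i) J \<noteq> {}"
proof -
  have "card (tree1.Dig (sp i) (hp i) J) = tree1.P (sp i) (hp i) J" by (rule tree1.card_Dig[OF tree_i])
  moreover have "0 < tree1.P (sp i) (hp i) J" by (rule tree1.P_pos[OF tree_i])
  ultimately show ?thesis by auto
qed

lemma D_ne: "D J \<noteq> {}" unfolding D_def using Dig_ne by (simp add: PiE_eq_empty_iff)

lemma Iv_eq: "tree1.Iv (sp i) (hp i) xs =
    {tree1.ctr (sp i) (hp i) xs - hp i (length xs) .. tree1.ctr (sp i) (hp i) xs + hp i (length xs)}"
  by (simp add: tree1.Iv_def[OF tree_i])

lemma bx_cbox: "bx J E = cbox (\<chi> i. tree1.ctr (sp i) (hp i) (E i) - hp i (length (E i)))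
                            (\<chi> i. tree1.ctr (sp i) (hp i) (E i) + hp i (length (E i)))"
  by (auto simp: bx_def mem_box_cart Iv_eq)

lemma hp_nn: "0 \<le> hp i n" using tree1.h_pos[OF tree_i[of i], of n] by simp

lemma ctr_in: "(\<chi> i. tree1.ctr (sp i) (hp i) (E i)) \<in> bx J E"
  using hp_nn by (auto simp: bx_def Iv_eq)

lemma bx_ne: "bx J E \<noteq> {}" using ctr_in by blast

lemma compact_bx: "compact (bx J E)" unfolding bx_cbox by simp

lemma compact_K: "compact (K J)" unfolding K_def using finite_D compact_bx by blast
lemma closed_K: "closed (K J)" using compact_K compact_imp_closed by blast

lemma K_dec: "K (Suc J) \<subseteq> K J"
proof
  fix x assume "x \<in> K (Suc J)"
  then obtain E where E: "E \<in> D (Suc J)" "x \<in> bx (Suc J) E" by (auto simp: K_def)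
  define E' where "E' i = tl (E i)" for i
  have Ei: "\<exists>u. u < tree1.Mc (sp i) (hp i) J \<and> E i = u # E' i \<and> E' i \<in> tree1.Dig (sp i) (hp i) J" for i
  proof -
    have "E i \<in> tree1.Dig (sp i) (hp i) (Suc J)" using E(1) by (auto simp: D_def)
    then show ?thesis by (auto simp: tree1.Dig.simps[OF tree_i] E'_def)
  qed
  have "E' \<in> D J" using Ei by (auto simp: D_def)
  moreover have "x \<in> bx J E'"
  proof -
    have "x $ i \<in> tree1.Iv (sp i) (hp i) (E' i)" for i
    proof -
      obtain u where u: "u < tree1.Mc (sp i) (hp i) J" "E i = u # E' i" "E' i \<in> tree1.Dig (sp i) (hp i) J"
        using Ei by blast
      have "length (E' i) = J" using u(3) tree1.Dig_len[OF tree_i[of i]] by blast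
      then have "tree1.Iv (sp i) (hp i) (E i) \<subseteq> tree1.Iv (sp i) (hp i) (E' i)"
        using tree1.child_sub[OF tree_i[of i], of u "E' i"] u by simp
      then show ?thesis using E(2) by (auto simp: bx_def)
    qed
    then show ?thesis by (simp add: bx_def)
  qed
  ultimately show "x \<in> K J" by (auto simp: K_def)
qed

lemma len_D: "E \<in> D J \<Longrightarrow> length (E i) = J"
  using tree1.Dig_len[OF tree_i] by (auto simp: D_def)

lemma rho_bound: "E \<in> D J \<Longrightarrow> x \<in> bx J E \<Longrightarrow> y \<in> bx J E \<Longrightarrow> dist x y \<le> rho J"
proof -
  assume E: "E \<in> D J" and x: "x \<in> bx J E" and y: "y \<in> bx J E"
  have "dist x y = norm (x - y)" by (simp add: dist_norm)
  also have "\<dots> \<le> (\<Sum>i\<in>UNIV. \<bar>(x - y) $ i\<bar>)" by (rule norm_le_l1_cart)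
  also have "\<dots> \<le> (\<Sum>i\<in>UNIV. 2 * hp i J)"
  proof (rule sum_mono)
    fix i
    have "x $ i \<in> tree1.Iv (sp i) (hp i) (E i)" "y $ i \<in> tree1.Iv (sp i) (hp i) (E i)"
      using x y by (auto simp: bx_def)
    then show "\<bar>(x - y) $ i\<bar> \<le> 2 * hp i J" using len_D[OF E, of i] by (auto simp: Iv_eq abs_le_iff)
  qed
  finally show ?thesis by (simp add: rho_def)
qed

lemma rho0: "0 < e \<Longrightarrow> \<exists>J0. \<forall>J\<ge>J0. rho J < e"
proof -
  assume e: "0 < e"
  obtain J0 where J0: "real CARD('n) * c0 / e < 2 ^ J0" using real_arch_pow[of 2 "real CARD('n) * c0 / e"] by auto
  have "rho J < e" if "J0 \<le> J" for J
  proof -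
    have "2 * hp i J \<le> 2 * ((c0 / 2) / 2 ^ J)" for i
      using tree1.h_decay[OF tree_i[of i], of J] by (simp add: hp_def h1_0 ho_0 split: if_splits)
    then have "rho J \<le> (\<Sum>i\<in>(UNIV::'n set). 2 * ((c0 / 2) / 2 ^ J))"
      unfolding rho_def by (intro sum_mono) auto
    also have "\<dots> = real CARD('n) * c0 / 2 ^ J" by simp
    also have "\<dots> \<le> real CARD('n) * c0 / 2 ^ J0"
      using that c01 by (intro divide_left_mono) (auto intro: power_increasing)
    also have "\<dots> < e" using J0 e by (simp add: field_simps)
    finally show ?thesis .
  qed
  then show ?thesis by blast
qed

lemma nu_i1: "tree1.nu (sp i1) (hp i1) = tx.nu" by (simp add: sp_def hp_def)
lemma nu_io: "i \<noteq> i1 \<Longrightarrow> tree1.nu (sp i) (hp i) = tw.nu" by (simp add: sp_def hp_def)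

lemma card_rest: "card (UNIV - {i1}) = m"
  using m_def by (simp add: card_Diff_singleton)

lemma count:
  assumes V: "bounded V" "diameter V \<le> 1"
  shows "real (card {E \<in> D J. bx J E \<subseteq> V}) \<le> (32 / c0) ^ Suc m * diameter V powr s0 * real (card (D J))"
proof (cases "{E \<in> D J. bx J E \<subseteq> V} = {}")
  case True
  have "0 \<le> (32 / c0) ^ Suc m * diameter V powr s0 * real (card (D J))" using c01 by simp
  then show ?thesis unfolding True by simp
next
  case False
  then obtain E0 where E0: "E0 \<in> D J" "bx J E0 \<subseteq> V" by auto
  define y where "y = (\<chi> i. tree1.ctr (sp i) (hp i) (E0 i))"
  have yV: "y \<in> V" using ctr_in[of E0 J] E0 by (auto simp: y_def)
  define d where "d = diameter V"
  have dpos: "0 < d"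
  proof -
    define p where "p = (\<chi> i. tree1.ctr (sp i) (hp i) (E0 i) - hp i J)"
    define q where "q = (\<chi> i. tree1.ctr (sp i) (hp i) (E0 i) + hp i J)"
    have "p \<in> bx J E0" "q \<in> bx J E0" using len_D[OF E0(1)] hp_nn
      by (auto simp: p_def q_def bx_def Iv_eq)
    then have pq: "p \<in> V" "q \<in> V" using E0 by auto
    have "2 * hp i1 J = \<bar>(q - p) $ i1\<bar>" using hp_nn[of i1 J] by (simp add: p_def q_def)
    also have "\<dots> \<le> norm (q - p)" by (rule component_le_norm_cart)
    also have "\<dots> = dist q p" by (simp add: dist_norm)
    also have "\<dots> \<le> d" unfolding d_def by (rule diameter_bounded_bound[OF V(1) pq(2,1)])
    finally show ?thesis using tree1.h_pos[OF tree_i[of i1], of J] by simp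
  qed
  have d1: "d \<le> 1" using V by (simp add: d_def)
  obtain \<beta>1 \<beta>o where b: "0 \<le> \<beta>1" "0 \<le> \<beta>o" "\<beta>1 * \<beta>o ^ m \<le> (32 / c0) ^ Suc m * d powr s0"
    "\<And>J y. tx.nu J y d \<le> \<beta>1" "\<And>J y. tw.nu J y d \<le> \<beta>o"
    using zone_bound[OF dpos d1] by blast
  define A where "A i = tree1.Aset (sp i) (hp i) J (y $ i) d" for i
  have finA: "finite (A i)" for i unfolding A_def by (rule tree1.finite_Aset[OF tree_i])
  have sub: "{E \<in> D J. bx J E \<subseteq> V} \<subseteq> (\<Pi>\<^sub>E i\<in>UNIV. A i)"
  proof
    fix E assume "E \<in> {E \<in> D J. bx J E \<subseteq> V}"
    then have E: "E \<in> D J" "bx J E \<subseteq> V" by auto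
    have "E i \<in> A i" for i
    proof -
      have "tree1.Iv (sp i) (hp i) (E i) \<subseteq> {y $ i - d .. y $ i + d}"
      proof
        fix t assume t: "t \<in> tree1.Iv (sp i) (hp i) (E i)"
        define z where "z = (\<chi> k. if k = i then t else tree1.ctr (sp k) (hp k) (E k))"
        have "z \<in> bx J E" using t hp_nn by (auto simp: z_def bx_def Iv_eq)
        then have zV: "z \<in> V" using E by auto
        have "\<bar>t - y $ i\<bar> = \<bar>(z - y) $ i\<bar>" by (simp add: z_def)
        also have "\<dots> \<le> norm (z - y)" by (rule component_le_norm_cart)
        also have "\<dots> = dist z y" by (simp add: dist_norm)
        also have "\<dots> \<le> d" unfolding d_def by (rule diameter_bounded_bound[OF V(1) zV yV])
        finally show "t \<in> {y $ i - d .. y $ i + d}" by (simp add: abs_le_iff)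
      qed
      moreover have "E i \<in> tree1.Dig (sp i) (hp i) J" using E(1) by (auto simp: D_def)
      ultimately show ?thesis by (simp add: A_def tree1.Aset_def[OF tree_i])
    qed
    then show "E \<in> (\<Pi>\<^sub>E i\<in>UNIV. A i)" by auto
  qed
  have "card {E \<in> D J. bx J E \<subseteq> V} \<le> card (\<Pi>\<^sub>E i\<in>UNIV. A i)"
    by (rule card_mono[OF _ sub]) (simp add: finite_PiE finA)
  also have "\<dots> = (\<Prod>i\<in>UNIV. card (A i))" by (simp add: card_PiE)
  finally have "real (card {E \<in> D J. bx J E \<subseteq> V}) \<le> real (\<Prod>i\<in>UNIV. card (A i))"
    by (simp only: of_nat_le_iff)
  also have "\<dots> = (\<Prod>i\<in>UNIV. real (card (A i)))" by (rule of_nat_prod)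
  also have "\<dots> = (\<Prod>i\<in>UNIV. tree1.nu (sp i) (hp i) J (y $ i) d * real (tree1.P (sp i) (hp i) J))"
  proof (rule prod.cong)
    fix i
    have "0 < tree1.P (sp i) (hp i) J" by (rule tree1.P_pos[OF tree_i])
    then show "real (card (A i)) = tree1.nu (sp i) (hp i) J (y $ i) d * real (tree1.P (sp i) (hp i) J)"
      by (simp add: A_def tree1.nu_def[OF tree_i])
  qed simp
  also have "\<dots> = (\<Prod>i\<in>UNIV. tree1.nu (sp i) (hp i) J (y $ i) d) * (\<Prod>i\<in>UNIV. real (tree1.P (sp i) (hp i) J))"
    by (rule prod.distrib)
  also have "(\<Prod>i\<in>UNIV. real (tree1.P (sp i) (hp i) J)) = real (card (D J))"
  proof -
    have "card (D J) = (\<Prod>i\<in>UNIV. card (tree1.Dig (sp i) (hp i) J))" by (simp add: D_def card_PiE)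
    also have "\<dots> = (\<Prod>i\<in>UNIV. tree1.P (sp i) (hp i) J)"
      by (rule prod.cong) (simp_all add: tree1.card_Dig[OF tree_i])
    finally show ?thesis by simp
  qed
  also have "(\<Prod>i\<in>UNIV. tree1.nu (sp i) (hp i) J (y $ i) d) \<le> (32 / c0) ^ Suc m * d powr s0"
  proof -
    have "(\<Prod>i\<in>UNIV. tree1.nu (sp i) (hp i) J (y $ i) d) =
        tree1.nu (sp i1) (hp i1) J (y $ i1) d * (\<Prod>i\<in>UNIV - {i1}. tree1.nu (sp i) (hp i) J (y $ i) d)"
      by (simp add: prod.remove)
    also have "\<dots> \<le> \<beta>1 * \<beta>o ^ m"
    proof (rule mult_mono)
      show "tree1.nu (sp i1) (hp i1) J (y $ i1) d \<le> \<beta>1" using b(4) by (simp add: nu_i1)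
      have "(\<Prod>i\<in>UNIV - {i1}. tree1.nu (sp i) (hp i) J (y $ i) d) \<le> (\<Prod>i\<in>UNIV - {i1}. \<beta>o)"
      proof (rule prod_mono)
        fix i assume "i \<in> UNIV - {i1}"
        then show "0 \<le> tree1.nu (sp i) (hp i) J (y $ i) d \<and> tree1.nu (sp i) (hp i) J (y $ i) d \<le> \<beta>o"
          using b(5) tw.nu_nonneg by (simp add: nu_io)
      qed
      also have "\<dots> = \<beta>o ^ m" by (simp add: card_rest)
      finally show "(\<Prod>i\<in>UNIV - {i1}. tree1.nu (sp i) (hp i) J (y $ i) d) \<le> \<beta>o ^ m" .
      show "0 \<le> \<beta>1" by (rule b(1))
      show "0 \<le> (\<Prod>i\<in>UNIV - {i1}. tree1.nu (sp i) (hp i) J (y $ i) d)"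
        using tree1.nu_nonneg[OF tree_i] by (simp add: prod_nonneg)
    qed
    also have "\<dots> \<le> (32 / c0) ^ Suc m * d powr s0" by (rule b(3))
    finally show ?thesis .
  qed
  then have "(\<Prod>i\<in>UNIV. tree1.nu (sp i) (hp i) J (y $ i) d) * real (card (D J))
      \<le> (32 / c0) ^ Suc m * d powr s0 * real (card (D J))"
    by (rule mult_right_mono) simp
  finally show ?thesis by (simp add: d_def)
qed

lemma K0_cube: "K 0 \<subseteq> {x. \<forall>i. 0 \<le> x $ i \<and> x $ i \<le> c0}"
proof
  fix x assume "x \<in> K 0"
  then obtain E where E: "E \<in> D 0" "x \<in> bx 0 E" by (auto simp: K_def)
  have "0 \<le> x $ i \<and> x $ i \<le> c0" for i
  proof -
    have Ei: "E i = []" using E(1) by (auto simp: D_def tree1.Dig.simps[OF tree_i])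
    have h: "sp i 0 = c0/2" "hp i 0 = c0/2" by (auto simp: sp_def hp_def s1_def so_def h1_0 ho_0)
    have p: "tree1.pos (sp i) (hp i) [] = 1" by (simp add: tree1.pos.simps[OF tree_i])
    have "x $ i \<in> tree1.Iv (sp i) (hp i) (E i)" using E(2) by (auto simp: bx_def)
    then have "x $ i \<in> {1 * (c0/2) - c0/2 .. 1 * (c0/2) + c0/2}"
      unfolding Ei Iv_eq tree1.ctr_def[OF tree_i] p by (simp add: h)
    then show ?thesis by simp
  qed
  then show "x \<in> {x. \<forall>i. 0 \<le> x $ i \<and> x $ i \<le> c0}" by simp
qed

lemma Dk_exp: "(real CARD('n) - (real CARD('n) - 1) * a + real CARD('n) * (2*a - 1)) / (real CARD('n) + 1) = a"
proof -
  have "real CARD('n) + 1 \<noteq> 0" by (simp add: add_pos_nonneg)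
  moreover have "real CARD('n) - (real CARD('n) - 1) * a + real CARD('n) * (2*a - 1) = a * (real CARD('n) + 1)"
    by (simp add: algebra_simps)
  ultimately show ?thesis by simp
qed

lemma K_sub_F: "K (Suc j) \<subseteq> F_k i1 a (2*a - 1) c (kseq (Suc j))"
proof
  fix x assume "x \<in> K (Suc j)"
  then obtain E where E: "E \<in> D (Suc j)" "x \<in> bx (Suc j) E" by (auto simp: K_def)
  define J where "J = Suc j"
  define pv where "pv i = tree1.pos (sp i) (hp i) (E i)" for i
  have Rk: "R_k (kseq J) = R J" by (simp add: R_k_def R_def)
  have Dk: "D_k CARD('n) a (2*a - 1) (kseq J) = R J powr a"
    unfolding D_k_def Rk Dk_exp ..
  have RJ: "0 < R J" by (rule R_pos)
  have cen: "slab_center i1 a (2*a - 1) (kseq J) pv 1 $ i = of_int (pv i) * sp i J" for i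
  proof (cases "i = i1")
    case True
    have e1: "(R J powr a)\<^sup>2 = R J powr (2 * a)" using RJ by (simp add: powr_power)
    have e2: "R J / R J powr (2 * a) = R J powr (1 - 2 * a)"
      using RJ by (simp add: powr_diff)
    have "2 * real_of_int (pv i1) * R J / (1 * (R J powr a)\<^sup>2) = 2 * real_of_int (pv i1) * (R J / R J powr (2 * a))"
      unfolding e1 by simp
    also have "\<dots> = of_int (pv i1) * (2 * R J powr (1 - 2*a))" unfolding e2 by simp
    finally have "2 * real_of_int (pv i1) * R J / (1 * (R J powr a)\<^sup>2) = of_int (pv i1) * (2 * R J powr (1 - 2*a))" .
    moreover have "sp i1 J = 2 * R J powr (1 - 2*a)" by (simp add: sp_def J_def s1_Suc)
    ultimately show ?thesis using True unfolding slab_center_def Rk Dk by simp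
  next
    case False
    have "real_of_int (pv i) / (R J powr a * 1) = of_int (pv i) * R J powr (-a)"
      by (simp add: powr_minus divide_inverse)
    moreover have "sp i J = R J powr (-a)" using False by (simp add: sp_def J_def so_Suc)
    ultimately show ?thesis using False unfolding slab_center_def Rk Dk by simp
  qed
  have wid: "(if i = i1 then c * R_k (kseq J) powr (-1/2) else c * R_k (kseq J) powr (-1)) / 2 = hp i J" for i
    unfolding Rk by (simp add: hp_def J_def h1_Suc ho_Suc)
  have ctr: "tree1.ctr (sp i) (hp i) (E i) = of_int (pv i) * sp i J" for i
    using len_D[OF E(1), of i] by (simp add: tree1.ctr_def[OF tree_i] pv_def J_def)
  have "x \<in> slab i1 a (2*a - 1) c (kseq J) pv 1"
  proof -
    have "\<bar>x $ i - slab_center i1 a (2*a - 1) (kseq J) pv 1 $ i\<bar>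
        \<le> (if i = i1 then c * R_k (kseq J) powr (-1/2) else c * R_k (kseq J) powr (-1)) / 2" for i
    proof -
      have "x $ i \<in> tree1.Iv (sp i) (hp i) (E i)" using E(2) by (auto simp: bx_def)
      then have "\<bar>x $ i - tree1.ctr (sp i) (hp i) (E i)\<bar> \<le> hp i J"
        using len_D[OF E(1), of i] by (auto simp: Iv_eq J_def abs_le_iff)
      then show ?thesis unfolding wid cen ctr[symmetric] .
    qed
    then show ?thesis by (simp add: slab_def)
  qed
  moreover have "admissible i1 pv 1" by (simp add: admissible_def)
  moreover have "real_of_int 1 \<le> Q_k CARD('n) a (2*a - 1) (kseq J)"
    by (simp add: Q_k_def R_k_def)
  ultimately show "x \<in> F_k i1 a (2*a - 1) c (kseq (Suc j))"
    unfolding F_k_def J_def by blast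
qed

lemma inter_K: "(\<Inter>J. K J) \<subseteq> divergence_set i1 a (2*a - 1) c \<inter> {x. \<forall>i. 0 \<le> x $ i \<and> x $ i \<le> c0}"
proof
  fix x assume x: "x \<in> (\<Inter>J. K J)"
  have "x \<in> divergence_set i1 a (2*a - 1) c"
    unfolding divergence_set_def
  proof
    fix N
    have "x \<in> F_k i1 a (2*a - 1) c (kseq (Suc N))" using x K_sub_F[of N] by auto
    moreover have "N \<le> kseq (Suc N)" using kseq_ge[of "Suc N"] by simp
    ultimately show "x \<in> (\<Union>k\<in>{N..}. F_k i1 a (2*a - 1) c k)" by auto
  qed
  moreover have "x \<in> {x. \<forall>i. 0 \<le> x $ i \<and> x $ i \<le> c0}" using x K0_cube by auto
  ultimately show "x \<in> divergence_set i1 a (2*a - 1) c \<inter> {x. \<forall>i. 0 \<le> x $ i \<and> x $ i \<le> c0}" by blast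
qed

lemma positive_measure:
  assumes "0 \<le> s" "s \<le> s0"
  shows "hausdorff_measure s (divergence_set i1 a (2*a - 1) c \<inter> {x. \<forall>i. 0 \<le> x $ i \<and> x $ i \<le> c0}) \<noteq> 0"
proof -
  let ?E = "divergence_set i1 a (2*a - 1) c \<inter> {x. \<forall>i. 0 \<le> x $ i \<and> x $ i \<le> c0}"
  have "ennreal (1 / (2 * (32 / c0) ^ Suc m * 2 powr s0)) \<le> hausdorff_pre s (1/4) ?E"
  proof (rule mass_principle[where K = K and D = D and bx = bx and \<rho> = rho])
    show "compact (K 0)" by (rule compact_K)
    show "\<And>J. closed (K J)" by (rule closed_K)
    show "\<And>J. K (Suc J) \<subseteq> K J" by (rule K_dec)
    show "\<And>J. K J = (\<Union>e\<in>D J. bx J e)" by (simp add: K_def)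
    show "\<And>J. finite (D J)" by (rule finite_D)
    show "\<And>J. D J \<noteq> {}" by (rule D_ne)
    show "\<And>J e. e \<in> D J \<Longrightarrow> bx J e \<noteq> {}" by (rule bx_ne)
    show "\<And>J e x y. e \<in> D J \<Longrightarrow> x \<in> bx J e \<Longrightarrow> y \<in> bx J e \<Longrightarrow> dist x y \<le> rho J" by (rule rho_bound)
    show "\<And>e. 0 < e \<Longrightarrow> \<exists>J0. \<forall>J\<ge>J0. rho J < e" by (rule rho0)
    show "\<And>J V. bounded V \<Longrightarrow> diameter V \<le> 1 \<Longrightarrow>
        real (card {e \<in> D J. bx J e \<subseteq> V}) \<le> (32 / c0) ^ Suc m * diameter V powr s0 * real (card (D J))"
      by (rule count)
    show "1 \<le> (32 / c0) ^ Suc m" by (rule Cc1)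
    show "0 < s0" using s01 by simp
    show "0 \<le> s" "s \<le> s0" using assms by auto
    show "(\<Inter>J. K J) \<subseteq> ?E" by (rule inter_K)
  qed auto
  also have "\<dots> \<le> hausdorff_measure s ?E"
    unfolding hausdorff_measure_def by (rule SUP_upper) simp
  finally have "ennreal (1 / (2 * (32 / c0) ^ Suc m * 2 powr s0)) \<le> hausdorff_measure s ?E" .
  moreover have "0 < 1 / (2 * (32 / c0) ^ Suc m * 2 powr s0)" using c01 by simp
  ultimately show ?thesis by (auto simp: ennreal_eq_0_iff)
qed

end

lemma grid_zero:
  fixes E :: "(real ^ 'n) set"
  assumes EC: "E \<subseteq> {x. \<forall>i. 0 \<le> x $ i \<and> x $ i \<le> 1}"
  shows "hausdorff_measure (real CARD('n) + 1) E = 0"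
proof -
  let ?n = "real CARD('n)"
  have pre0: "hausdorff_pre (?n + 1) \<delta> E = 0" if \<delta>: "0 < \<delta>" for \<delta>
  proof -
    have "hausdorff_pre (?n + 1) \<delta> E \<le> 0 + ennreal e" if t: "(0::ennreal) < top" and e: "0 < e" for e
    proof -
      obtain M :: nat where M: "?n ^ (CARD('n) + 1) / e + ?n / \<delta> + 1 < real M"
        using reals_Archimedean2 by blast
      have n0: "0 \<le> ?n ^ (CARD('n) + 1) / e" "0 \<le> ?n / \<delta>" using e \<delta> by auto
      have M1: "1 \<le> M" using M n0 by linarith
      have Mp: "0 < real M" using M1 by simp
      have Md: "?n / real M \<le> \<delta>"
      proof -
        have "?n / \<delta> < real M" using M n0 by linarith
        then have "?n < real M * \<delta>" using \<delta> by (simp add: field_simps)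
        then show ?thesis using Mp by (simp add: field_simps)
      qed
      have Me: "?n ^ (CARD('n) + 1) / real M \<le> e"
      proof -
        have "?n ^ (CARD('n) + 1) / e < real M" using M n0 by linarith
        then have "?n ^ (CARD('n) + 1) < real M * e" using e by (simp add: field_simps)
        then show ?thesis using Mp by (simp add: field_simps)
      qed
      define VV where "VV = (\<Pi>\<^sub>E i\<in>(UNIV::'n set). {..<M})"
      have finVV: "finite VV" unfolding VV_def by (intro finite_PiE) auto
      define G where "G v = {x::real^'n. \<forall>i. real (v i) / M \<le> x $ i \<and> x $ i \<le> (real (v i) + 1) / M}" for v :: "'n \<Rightarrow> nat"
      obtain vs where vs: "set vs = VV" "distinct vs" using finite_distinct_list[OF finVV] by blast
      define U where "U k = (if k < length vs then G (vs ! k) else {})" for k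
      have cov: "E \<subseteq> (\<Union>k. U k)"
      proof
        fix x assume "x \<in> E"
        then have x: "\<And>i. 0 \<le> x $ i \<and> x $ i \<le> 1" using EC by auto
        define v where "v i = min (nat \<lfloor>real M * x $ i\<rfloor>) (M - 1)" for i
        have "v \<in> VV" using M1 by (auto simp: VV_def v_def)
        moreover have "x \<in> G v"
        proof -
          have "real (v i) / M \<le> x $ i \<and> x $ i \<le> (real (v i) + 1) / M" for i
          proof -
            have fl0: "0 \<le> \<lfloor>real M * x $ i\<rfloor>" using x[of i] by simp
            have a1: "real (v i) \<le> real M * x $ i"
            proof -
              have "real (v i) \<le> real (nat \<lfloor>real M * x $ i\<rfloor>)" by (simp add: v_def)
              also have "\<dots> = of_int \<lfloor>real M * x $ i\<rfloor>" using fl0 by simp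
              also have "\<dots> \<le> real M * x $ i" by simp
              finally show ?thesis .
            qed
            have a2: "real M * x $ i \<le> real (v i) + 1"
            proof (cases "nat \<lfloor>real M * x $ i\<rfloor> \<le> M - 1")
              case True
              then have "v i = nat \<lfloor>real M * x $ i\<rfloor>" by (simp add: v_def)
              then have "real (v i) = of_int \<lfloor>real M * x $ i\<rfloor>" using fl0 by simp
              then show ?thesis by linarith
            next
              case False
              then have "v i = M - 1" by (simp add: v_def)
              then have "real (v i) + 1 = real M" using M1 by simp
              moreover have "real M * x $ i \<le> real M" using x[of i] Mp by (simp add: mult_left_le)
              ultimately show ?thesis by simp
            qed
            show ?thesis using a1 a2 Mp by (simp add: field_simps)
          qed
          then show ?thesis by (simp add: G_def)
        qed
        ultimately obtain k where "k < length vs" "vs ! k = v" using vs by (metis in_set_conv_nth)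
        then have "x \<in> U k" using \<open>x \<in> G v\<close> by (simp add: U_def)
        then show "x \<in> (\<Union>k. U k)" by blast
      qed
      have Gcbox: "G v = cbox (\<chi> i. real (v i) / M) (\<chi> i. (real (v i) + 1) / M)" for v
        by (auto simp: G_def mem_box_cart)
      have bU: "bounded (U k)" for k by (simp add: U_def Gcbox)
      have dG: "diameter (G v) \<le> ?n / M" for v
      proof (rule diameter_le)
        show "G v \<noteq> {} \<or> 0 \<le> ?n / M" by simp
        fix x y assume "x \<in> G v" "y \<in> G v"
        then have xy0: "\<And>i. real (v i) / M \<le> x $ i \<and> x $ i \<le> (real (v i) + 1) / M"
          "\<And>i. real (v i) / M \<le> y $ i \<and> y $ i \<le> (real (v i) + 1) / M"
          by (auto simp: G_def)
        have xy: "\<bar>(x - y) $ i\<bar> \<le> 1 / M" for i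
        proof -
          have "(real (v i) + 1) / M = real (v i) / M + 1 / M" by (simp add: add_divide_distrib)
          then show ?thesis using xy0(1)[of i] xy0(2)[of i] by (simp add: abs_le_iff)
        qed
        have "norm (x - y) \<le> (\<Sum>i\<in>UNIV. \<bar>(x - y) $ i\<bar>)" by (rule norm_le_l1_cart)
        also have "\<dots> \<le> (\<Sum>i\<in>(UNIV::'n set). 1 / real M)" by (rule sum_mono) (rule xy)
        also have "\<dots> = ?n / M" by simp
        finally show "norm (x - y) \<le> ?n / M" .
      qed
      have dU: "diameter (U k) \<le> ?n / M" for k
        using dG by (simp add: U_def)
      have dU0: "0 \<le> diameter (U k)" for k by (rule diameter_ge_0[OF bU])
      have "hausdorff_pre (?n + 1) \<delta> E \<le> (\<Sum>k. ennreal (diameter (U k) powr (?n + 1)))"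
        unfolding hausdorff_pre_def by (rule INF_lower) (use cov bU dU Md in \<open>auto intro: order_trans\<close>)
      also have "\<dots> = (\<Sum>k<length vs. ennreal (diameter (U k) powr (?n + 1)))"
        by (rule suminf_finite) (auto simp: U_def)
      also have "\<dots> \<le> (\<Sum>k<length vs. ennreal ((?n / M) powr (?n + 1)))"
        by (intro sum_mono ennreal_leI powr_mono2) (use dU dU0 in auto)
      also have "\<dots> = ennreal (\<Sum>k<length vs. (?n / M) powr (?n + 1))"
        by (rule sum_ennreal) simp
      also have "\<dots> = ennreal (real (length vs) * (?n / M) powr (?n + 1))"
        by simp
      also have "real (length vs) * (?n / M) powr (?n + 1) = ?n ^ (CARD('n) + 1) / real M"
      proof -
        have "length vs = card VV" using vs distinct_card by metis
        also have "\<dots> = M ^ CARD('n)" by (simp add: VV_def card_PiE)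
        finally have l: "real (length vs) = real M ^ CARD('n)" by simp
        have npos: "0 < ?n / M" using Mp by simp
        have "(?n / M) powr (?n + 1) = (?n / M) powr (real (CARD('n) + 1))" by (simp add: add.commute)
        also have "\<dots> = (?n / M) ^ (CARD('n) + 1)" by (rule powr_realpow[OF npos])
        finally have "(?n / M) powr (?n + 1) = (?n / M) ^ (CARD('n) + 1)" .
        then show ?thesis unfolding l using Mp by (simp add: power_divide field_simps)
      qed
      also have "ennreal (?n ^ (CARD('n) + 1) / real M) \<le> ennreal e" using Me by (rule ennreal_leI)
      finally show ?thesis by simp
    qed
    then have "hausdorff_pre (?n + 1) \<delta> E \<le> 0" by (rule ennreal_le_epsilon)
    then show ?thesis by simp
  qed
  show ?thesis unfolding hausdorff_measure_def
    by (intro antisym SUP_least) (auto simp: pre0)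
qed

theorem theorem5p3:
  fixes i1 :: "'n::finite" and a b c0 :: real
  assumes "CARD('n) \<ge> 2"
    and "1/2 < a" and "a \<le> 3/4" and "b = 2 * a - 1"
    and "0 < c0" and "c0 \<le> 1"
  shows "\<exists>cstar>0. \<forall>c. 0 < c \<and> c \<le> cstar \<longrightarrow>
           hausdorff_dim (divergence_set i1 a b c \<inter> {x :: real ^ 'n. \<forall>i. 0 \<le> x $ i \<and> x $ i \<le> c0})
             \<ge> 1/2 + (real CARD('n) - 1) * a + b"
proof (intro exI[of _ "1/2"] conjI allI impI)
  show "0 < (1/2::real)" by simp
  fix c :: real assume c: "0 < c \<and> c \<le> 1/2"
  let ?al = "1/2 + (real CARD('n) - 1) * a + b"
  define E where "E = divergence_set i1 a b c \<inter> {x :: real ^ 'n. \<forall>i. 0 \<le> x $ i \<and> x $ i \<le> c0}"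
  define S where "S = {s. 0 \<le> s \<and> hausdorff_measure s E = 0}"
  have ne: "S \<noteq> {}"
  proof -
    have "E \<subseteq> {x. \<forall>i. 0 \<le> x $ i \<and> x $ i \<le> 1}"
    proof
      fix x assume "x \<in> E"
      then have "\<forall>i. 0 \<le> x $ i \<and> x $ i \<le> c0" by (simp add: E_def)
      then show "x \<in> {x. \<forall>i. 0 \<le> x $ i \<and> x $ i \<le> 1}" using assms(6) by (auto intro: order_trans)
    qed
    then have "hausdorff_measure (real CARD('n) + 1) E = 0" by (rule grid_zero)
    then have "real CARD('n) + 1 \<in> S" by (simp add: S_def)
    then show ?thesis by blast
  qed
  have lb: "?al \<le> s" if "s \<in> S" for s
  proof (rule ccontr)
    assume "\<not> ?al \<le> s"
    then have sal: "s < ?al" by simp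
    have s0': "0 \<le> s" "hausdorff_measure s E = 0" using that by (auto simp: S_def)
    have al1: "1 < ?al"
    proof -
      have "1 * a \<le> (real CARD('n) - 1) * a" using assms(1,2) by (intro mult_right_mono) auto
      then show ?thesis using assms(2,4) by linarith
    qed
    define s0 where "s0 = max s ((1 + ?al) / 2)"
    have mreal: "real (CARD('n) - 1) = real CARD('n) - 1" using assms(1) by (simp add: of_nat_diff)
    interpret construct i1 a c c0 s0 "CARD('n) - 1"
    proof
      show "CARD('n) - 1 = CARD('n) - 1" ..
      show "2 \<le> CARD('n)" by (rule assms(1))
      show "1/2 < a" "a \<le> 3/4" using assms by auto
      show "0 < c" "c \<le> 1/2" using c by auto
      show "0 < c0" "c0 \<le> 1" using assms by auto
      have "1 \<le> (1 + ?al) / 2" using al1 by (simp add: field_simps)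
      then show "1 \<le> s0" unfolding s0_def by (rule order_trans[OF _ max.cobounded2])
      show "s0 < 1/2 + real (CARD('n) - 1) * a + (2*a - 1)"
      proof -
        have A: "?al = 1/2 + real (CARD('n) - 1) * a + (2*a - 1)" using assms(4) mreal by simp
        have gen: "\<And>X::real. 1 < X \<Longrightarrow> (1 + X) / 2 < X" by (simp add: field_simps)
        have B: "(1 + ?al) / 2 < ?al" by (rule gen[OF al1])
        have "s0 < ?al" unfolding s0_def max_less_iff_conj using sal B by blast
        then show ?thesis using A by simp
      qed
    qed
    have "hausdorff_measure s (divergence_set i1 a (2*a - 1) c \<inter> {x. \<forall>i. 0 \<le> x $ i \<and> x $ i \<le> c0}) \<noteq> 0"
      by (rule positive_measure) (use s0' in \<open>auto simp: s0_def\<close>)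
    then show False using s0' assms(4) by (simp add: E_def)
  qed
  show "hausdorff_dim (divergence_set i1 a b c \<inter> {x :: real ^ 'n. \<forall>i. 0 \<le> x $ i \<and> x $ i \<le> c0}) \<ge> ?al"
    unfolding hausdorff_dim_def E_def[symmetric] S_def[symmetric]
    by (rule cInf_greatest[OF ne]) (rule lb)
qed

end
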